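(* Let the setting be as described in the context. For each $N\in\mathcal N$ with $\mathcal E_N\cap\mathcal E_I\neq\emptyset$ let $\theta_N\in M_h$ be the unique element vanishing on $\mathcal E_I\setminus\mathcal E_N$ such that for every $K\in\mathcal T_N$: $b(\theta_N,\lambda_N\chi_K)=r(\lambda_N\chi_K)$ and $b(\theta_N,\lambda_M\chi_K)=0$ for every vertex $M\neq N$ of $K$ (and set $\theta_N=0$ if $\mathcal E_N\cap\mathcal E_I=\emptyset$). Let $(u_h,\theta_h)\in DG_h\times M_h$ be the solution of the mixed problem $\tilde a_h(u_h,w)+b(\theta_h,w)=l_h(w)$ for all $w\in DG_h$, $b(\mu,u_h)=0$ for all $\mu\in M_h$. Then $$\theta_h=\sum_{N\in\mathcal N}\theta_N .$$
   Context: Let $\Omega\subset\mathbb R^2$ be a bounded domain with Lipschitz, piecewise smooth boundary, $f\in L^2(\Omega)$, $g\in H^{1/2}(\partial\Omega)$. Let $\Omega_0\supset\Omega$ be a polygonal background domain with a shape-regular triangulation $\mathcal T_{0,h}$. Let $\Omega_h$ be a polygonal domain with $\Omega\subset\Omega_h\subset\Omega_0$ such that for each triangle $K$ with $K\cap\partial\Omega_h\neq\emptyset$, $\Gamma_K:=K\cap\partial\Omega_h$ is a line segment; $f$ is extended to $\Omega_h\setminus\Omega$ and $g_h$ is a given function on $\partial\Omega_h$. Active mesh $\mathcal T_h=\{K\in\mathcal T_{0,h}:K\cap\Omega_h\neq\emptyset\}$, $\triangle_h=\bigcup_{K\in\mathcal T_h}K$, $\mathcal T_h^b=\{K:K\cap\partial\Omega_h\neq\emptyset\}$,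 $h_K=\operatorname{diam}K$. $\mathcal E_I$: interior edges of $\mathcal T_h$, each with length $h_F$ and fixed unit normal $\boldsymbol n_F$; jump $[\![v]\!]=v^+-v^-$ and average $\{v\}=\frac12(v^++v^-)$, where $v^\pm(\boldsymbol x)=\lim_{s\to0^+}v(\boldsymbol x\mp s\boldsymbol n_F)$ and $K_F^\pm$ are the neighbours ($\boldsymbol n_F$ outward to $K_F^+$). $\mathcal E_g=\{F\in\mathcal E_I:(K_F^+\cup K_F^-)\cap\partial\Omega_h\neq\emptyset\}$. $\boldsymbol n_h$ outward unit normal of $\partial\Omega_h$, $\partial_{\boldsymbol n_h}=\boldsymbol n_h\cdot\nabla$, $\partial_{\boldsymbol n_F}=\boldsymbol n_F\cdot\nabla$. $\beta,\gamma>0$ constants, $\beta$ large enough that $a_h$ is coercive on $CG_h$. $a_h(w,v)=(\nabla w,\nabla v)_{\Omega_h}-\langle\partial_{\boldsymbol n_h}w,v\rangle_{\partial\Omega_h}-\langle w,\partial_{\boldsymbol n_h}v\rangle_{\partial\Omega_h}+\sum_{K\in\mathcal T_h^b}\frac{\beta}{h_K}\langle w,v\rangle_{\Gamma_K}+\gamma\sum_{F\in\mathcal E_g}h_F\langle[\![\partial_{\boldsymbol n_F}w]\!],[\![\partial_{\boldsymbol n_F}v]\!]\rangle_F$; $l_h(v)=(f,v)_{\Omega_h}-\langle g_h,\partial_{\boldsymbol n_h}v\rangle_{\partial\Omega_h}+\sum_{K\in\mathcal T_h^b}\frac{\beta}{h_K}\langle g_h,v\rangle_{\Gamma_K}$;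 $\tilde a_h(v,w)=a_h(v,w)-\sum_{F\in\mathcal E_I}\langle\{\partial_{\boldsymbol n_F}v\},[\![w]\!]\rangle_{F\cap\Omega_h}-\sum_{F\in\mathcal E_I}\langle\{\partial_{\boldsymbol n_F}w\},[\![v]\!]\rangle_{F\cap\Omega_h}$. $CG_h=\{v\in H^1(\triangle_h):v|_K\in\mathbb P_1(K)\}$, $DG_h=\{v\in L^2(\triangle_h):v|_K\in\mathbb P_1(K)\}$; $u_h$ (first component of the mixed solution) equals the CutFEM solution in $CG_h$. Residual: $r(w)=l_h(w)-\tilde a_h(u_h,w)$, $w\in DG_h$. $\mathcal N$: vertices of $\mathcal T_h$, $\mathcal N_I$: those not on $\partial\triangle_h$; $\mathcal T_N,\mathcal E_N$: elements/edges with vertex $N$; $\mathfrak s_N(F)=\pm1$ according as $\boldsymbol n_F$ is oriented counter-clockwise around $N$ or not. $\lambda_M$: hat function of vertex $M$; $\chi_K$: indicator of $K$. $M_h=\{\mu\in L^2(\mathcal E_I):\mu|_F\in\mathbb P_1(F),\ \sum_{F\in\mathcal E_N\cap\mathcal E_I}\mathfrak s_N(F)h_F\mu|_F(N)=0\ \forall N\in\mathcal N_I\}$, $b(\mu,v)=\sum_{F\in\mathcal E_I}\frac{h_F}{2}\sum_{M\text{ vertex of }F}\mu|_F(M)[\![v]\!](M)$. *)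

theory Defs
  imports "HOL-Analysis.Analysis"
begin

(* Points of the plane; triangles and edges are represented by their vertex sets. *)
type_synonym pt = "real^2"
type_synonym vset = "pt set"

definition affine_fun :: "(pt \<Rightarrow> real) \<Rightarrow> bool" where
  "affine_fun \<phi> \<longleftrightarrow> (\<exists>a c. \<phi> = (\<lambda>x. a \<bullet> x + c))"

definition grad :: "(pt \<Rightarrow> real) \<Rightarrow> pt" where
  "grad \<phi> = (THE a. \<exists>c. \<phi> = (\<lambda>x. a \<bullet> x + c))"

definition triangle :: "vset \<Rightarrow> bool" where
  "triangle K \<longleftrightarrow> card K = 3 \<and> \<not> collinear K"

(* finite conforming triangulation: any two distinct triangles meet in the
   convex hull of their common vertices (empty set, a common vertex, or a common edge) *)
definition conforming :: "vset set \<Rightarrow> bool" where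
  "conforming T \<longleftrightarrow> finite T \<and> (\<forall>K\<in>T. triangle K) \<and>
     (\<forall>K\<in>T. \<forall>K'\<in>T. K \<noteq> K' \<longrightarrow> convex hull K \<inter> convex hull K' = convex hull (K \<inter> K'))"

definition nodes :: "vset set \<Rightarrow> pt set" where
  "nodes T = \<Union>T"

definition mesh_dom :: "vset set \<Rightarrow> pt set" where
  "mesh_dom T = (\<Union>K\<in>T. convex hull K)"

definition interior_nodes :: "vset set \<Rightarrow> pt set" where
  "interior_nodes T = {N \<in> nodes T. N \<notin> frontier (mesh_dom T)}"

definition interior_edges :: "vset set \<Rightarrow> vset set" where
  "interior_edges T = {F. card F = 2 \<and> (\<exists>K\<in>T. \<exists>K'\<in>T. K \<noteq> K' \<and> F \<subseteq> K \<and> F \<subseteq> K')}"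

(* K_F^- : the neighbour of F other than K_F^+ = Kp F *)
definition Km :: "vset set \<Rightarrow> (vset \<Rightarrow> vset) \<Rightarrow> vset \<Rightarrow> vset" where
  "Km T Kp F = (THE K. K \<in> T \<and> F \<subseteq> K \<and> K \<noteq> Kp F)"

definition nF :: "(vset \<Rightarrow> vset) \<Rightarrow> vset \<Rightarrow> pt" where
  "nF Kp F = (THE n. norm n = 1 \<and> (\<forall>x\<in>F. \<forall>y\<in>F. n \<bullet> (x - y) = 0) \<and>
                     (\<forall>x\<in>F. \<forall>z\<in>Kp F - F. n \<bullet> (z - x) < 0))"

(* \<s>_N(F) = 1 iff n_F is oriented counter-clockwise around the vertex N of F *)
definition sgn_ccw :: "(vset \<Rightarrow> vset) \<Rightarrow> pt \<Rightarrow> vset \<Rightarrow> real" where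
  "sgn_ccw Kp N F = (let M = the_elem (F - {N}); d = M - N; n = nF Kp F in
       if d $ 1 * n $ 2 - d $ 2 * n $ 1 > 0 then 1 else -1)"

(* a DG function assigns to each triangle K of T an affine function (its restriction to K) *)
definition DG :: "vset set \<Rightarrow> (vset \<Rightarrow> pt \<Rightarrow> real) set" where
  "DG T = {v. (\<forall>K\<in>T. affine_fun (v K)) \<and> (\<forall>K. K \<notin> T \<longrightarrow> v K = (\<lambda>_. 0))}"

definition CG :: "vset set \<Rightarrow> (vset \<Rightarrow> pt \<Rightarrow> real) set" where
  "CG T = {v \<in> DG T. \<forall>K\<in>T. \<forall>K'\<in>T. \<forall>x \<in> convex hull K \<inter> convex hull K'. v K x = v K' x}"

definition jump :: "vset set \<Rightarrow> (vset \<Rightarrow> vset) \<Rightarrow> (vset \<Rightarrow> pt \<Rightarrow> real) \<Rightarrow> vset \<Rightarrow> pt \<Rightarrow> real" where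
  "jump T Kp v F x = v (Kp F) x - v (Km T Kp F) x"

definition dn_jump :: "vset set \<Rightarrow> (vset \<Rightarrow> vset) \<Rightarrow> (vset \<Rightarrow> pt \<Rightarrow> real) \<Rightarrow> vset \<Rightarrow> real" where
  "dn_jump T Kp v F = nF Kp F \<bullet> grad (v (Kp F)) - nF Kp F \<bullet> grad (v (Km T Kp F))"

definition dn_avg :: "vset set \<Rightarrow> (vset \<Rightarrow> vset) \<Rightarrow> (vset \<Rightarrow> pt \<Rightarrow> real) \<Rightarrow> vset \<Rightarrow> real" where
  "dn_avg T Kp v F = (nF Kp F \<bullet> grad (v (Kp F)) + nF Kp F \<bullet> grad (v (Km T Kp F))) / 2"

(* multipliers: \<mu> F M is the value at the vertex M of F of the P1 function \<mu>|_F
   (zero junk outside interior edges / vertices) *)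
definition Mh :: "vset set \<Rightarrow> (vset \<Rightarrow> vset) \<Rightarrow> (vset \<Rightarrow> pt \<Rightarrow> real) set" where
  "Mh T Kp = {\<mu>. (\<forall>F M. (F \<notin> interior_edges T \<or> M \<notin> F) \<longrightarrow> \<mu> F M = 0) \<and>
      (\<forall>N \<in> interior_nodes T.
          (\<Sum>F \<in> {F \<in> interior_edges T. N \<in> F}. sgn_ccw Kp N F * diameter F * \<mu> F N) = 0)}"

definition bform :: "vset set \<Rightarrow> (vset \<Rightarrow> vset) \<Rightarrow> (vset \<Rightarrow> pt \<Rightarrow> real) \<Rightarrow> (vset \<Rightarrow> pt \<Rightarrow> real) \<Rightarrow> real" where
  "bform T Kp \<mu> v = (\<Sum>F \<in> interior_edges T. diameter F / 2 * (\<Sum>M\<in>F. \<mu> F M * jump T Kp v F M))"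

definition hat :: "vset \<Rightarrow> pt \<Rightarrow> (pt \<Rightarrow> real)" where
  "hat K M = (THE \<phi>. affine_fun \<phi> \<and> \<phi> M = 1 \<and> (\<forall>M' \<in> K - {M}. \<phi> M' = 0))"

definition hatchi :: "vset \<Rightarrow> pt \<Rightarrow> (vset \<Rightarrow> pt \<Rightarrow> real)" where
  "hatchi K M = (\<lambda>K'. if K' = K then hat K M else (\<lambda>_. 0))"

definition seg_int :: "pt \<Rightarrow> pt \<Rightarrow> (pt \<Rightarrow> real) \<Rightarrow> real" where
  "seg_int p q \<phi> = dist p q * integral {0..1} (\<lambda>t. \<phi> (p + t *\<^sub>R (q - p)))"

definition edge_int :: "vset \<Rightarrow> (pt \<Rightarrow> real) \<Rightarrow> real" where
  "edge_int F \<phi> = (SOME r. \<exists>p q. F = {p, q} \<and> r = seg_int p q \<phi>)"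

definition Tb :: "vset set \<Rightarrow> pt set \<Rightarrow> vset set" where
  "Tb T \<Omega>h = {K \<in> T. convex hull K \<inter> frontier \<Omega>h \<noteq> {}}"

definition Eg :: "vset set \<Rightarrow> (vset \<Rightarrow> vset) \<Rightarrow> pt set \<Rightarrow> vset set" where
  "Eg T Kp \<Omega>h = {F \<in> interior_edges T. Kp F \<in> Tb T \<Omega>h \<or> Km T Kp F \<in> Tb T \<Omega>h}"

(* \<Gamma> K = (p, q) gives the segment \<Gamma>_K = [p,q]; nh K is n_h on \<Gamma>_K *)
definition a_h :: "vset set \<Rightarrow> (vset \<Rightarrow> vset) \<Rightarrow> pt set \<Rightarrow> (vset \<Rightarrow> pt \<times> pt) \<Rightarrow> (vset \<Rightarrow> pt)
     \<Rightarrow> real \<Rightarrow> real \<Rightarrow> (vset \<Rightarrow> pt \<Rightarrow> real) \<Rightarrow> (vset \<Rightarrow> pt \<Rightarrow> real) \<Rightarrow> real" where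
  "a_h T Kp \<Omega>h \<Gamma> nh \<beta> \<gamma> w v =
     (\<Sum>K\<in>T. integral (convex hull K \<inter> \<Omega>h) (\<lambda>x. grad (w K) \<bullet> grad (v K)))
   - (\<Sum>K\<in>Tb T \<Omega>h. seg_int (fst (\<Gamma> K)) (snd (\<Gamma> K)) (\<lambda>x. (nh K \<bullet> grad (w K)) * v K x))
   - (\<Sum>K\<in>Tb T \<Omega>h. seg_int (fst (\<Gamma> K)) (snd (\<Gamma> K)) (\<lambda>x. w K x * (nh K \<bullet> grad (v K))))
   + (\<Sum>K\<in>Tb T \<Omega>h. \<beta> / diameter (convex hull K) *
         seg_int (fst (\<Gamma> K)) (snd (\<Gamma> K)) (\<lambda>x. w K x * v K x))
   + \<gamma> * (\<Sum>F\<in>Eg T Kp \<Omega>h. diameter F * edge_int F (\<lambda>x. dn_jump T Kp w F * dn_jump T Kp v F))"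

definition l_h :: "vset set \<Rightarrow> pt set \<Rightarrow> (vset \<Rightarrow> pt \<times> pt) \<Rightarrow> (vset \<Rightarrow> pt)
     \<Rightarrow> real \<Rightarrow> (pt \<Rightarrow> real) \<Rightarrow> (pt \<Rightarrow> real) \<Rightarrow> (vset \<Rightarrow> pt \<Rightarrow> real) \<Rightarrow> real" where
  "l_h T \<Omega>h \<Gamma> nh \<beta> f g v =
     (\<Sum>K\<in>T. integral (convex hull K \<inter> \<Omega>h) (\<lambda>x. f x * v K x))
   - (\<Sum>K\<in>Tb T \<Omega>h. seg_int (fst (\<Gamma> K)) (snd (\<Gamma> K)) (\<lambda>x. g x * (nh K \<bullet> grad (v K))))
   + (\<Sum>K\<in>Tb T \<Omega>h. \<beta> / diameter (convex hull K) *
         seg_int (fst (\<Gamma> K)) (snd (\<Gamma> K)) (\<lambda>x. g x * v K x))"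

definition at_h :: "vset set \<Rightarrow> (vset \<Rightarrow> vset) \<Rightarrow> pt set \<Rightarrow> (vset \<Rightarrow> pt \<times> pt) \<Rightarrow> (vset \<Rightarrow> pt)
     \<Rightarrow> real \<Rightarrow> real \<Rightarrow> (vset \<Rightarrow> pt \<Rightarrow> real) \<Rightarrow> (vset \<Rightarrow> pt \<Rightarrow> real) \<Rightarrow> real" where
  "at_h T Kp \<Omega>h \<Gamma> nh \<beta> \<gamma> v w =
     a_h T Kp \<Omega>h \<Gamma> nh \<beta> \<gamma> v w
   - (\<Sum>F\<in>interior_edges T. edge_int F (\<lambda>x. indicator \<Omega>h x * dn_avg T Kp v F * jump T Kp w F x))
   - (\<Sum>F\<in>interior_edges T. edge_int F (\<lambda>x. indicator \<Omega>h x * dn_avg T Kp w F * jump T Kp v F x))"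

definition polygonal :: "pt set \<Rightarrow> bool" where
  "polygonal S \<longleftrightarrow> (\<exists>P. finite P \<and> frontier S = (\<Union>(p,q)\<in>P. closed_segment p q))"

end

theory Submission
  imports Defs
begin

definition cr :: "pt \<Rightarrow> pt \<Rightarrow> real" where
  "cr u v = u$1 * v$2 - u$2 * v$1"

lemma inner2: "(u::pt) \<bullet> v = u$1 * v$1 + u$2 * v$2"
  by (simp add: inner_vec_def sum_2)

lemma vec2_eq: "(u::pt) = v \<longleftrightarrow> u$1 = v$1 \<and> u$2 = v$2"
  by (simp add: vec_eq_iff forall_2)

lemma cr_ne0_noncollinear:
  assumes "\<not> collinear {P, Q, R::pt}"
  shows "cr (Q - P) (R - P) \<noteq> 0"
proof
  assume h: "cr (Q - P) (R - P) = 0"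
  define u where "u = Q - P" define v where "v = R - P"
  have col: "collinear {0, u, v}"
  proof (cases "u = 0")
    case True then show ?thesis by (simp add: collinear_lemma)
  next
    case False
    then have uu: "u$1*u$1 + u$2*u$2 \<noteq> 0"
      by (simp add: vec2_eq sum_squares_eq_zero_iff)
    define c where "c = (u \<bullet> v) / (u$1*u$1 + u$2*u$2)"
    have hh: "u$1 * v$2 = u$2 * v$1" using h by (simp add: cr_def u_def v_def)
    have e1: "(u$1 * v$1 + u$2 * v$2) * u$1 = v$1 * (u$1 * u$1 + u$2 * u$2)" using hh by algebra
    have e2: "(u$1 * v$1 + u$2 * v$2) * u$2 = v$2 * (u$1 * u$1 + u$2 * u$2)" using hh by algebra
    have "v = c *\<^sub>R u"
      unfolding vec2_eq c_def inner2 using uu e1 e2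
      by (simp add: field_simps; metis hh mult.commute)
    then show ?thesis by (auto simp: collinear_lemma)
  qed
  have "collinear {Q, P, R}"
    using col collinear_3[of Q P R] by (simp add: u_def v_def)
  then show False using assms by (simp add: insert_commute)
qed

lemma noncol_distinct:
  assumes "\<not> collinear {P, Q, R::pt}" shows "P \<noteq> Q" "P \<noteq> R" "Q \<noteq> R"
  using assms collinear_2 by (auto simp: insert_commute)

lemma cr_ne0_any:
  assumes "\<not> collinear {P, Q, R::pt}"
  shows "cr (Q - P) (R - P) \<noteq> 0" "cr (R - P) (Q - P) \<noteq> 0"
        "cr (P - Q) (R - Q) \<noteq> 0" "cr (R - Q) (P - Q) \<noteq> 0"
        "cr (P - R) (Q - R) \<noteq> 0" "cr (Q - R) (P - R) \<noteq> 0"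
proof -
  have c: "\<not> collinear {P,R,Q}" "\<not> collinear {Q,P,R}" "\<not> collinear {Q,R,P}"
          "\<not> collinear {R,P,Q}" "\<not> collinear {R,Q,P}"
    using assms by (simp_all add: insert_commute)
  show "cr (Q - P) (R - P) \<noteq> 0" "cr (R - P) (Q - P) \<noteq> 0"
        "cr (P - Q) (R - Q) \<noteq> 0" "cr (R - Q) (P - Q) \<noteq> 0"
        "cr (P - R) (Q - R) \<noteq> 0" "cr (Q - R) (P - R) \<noteq> 0"
    using cr_ne0_noncollinear[OF assms] cr_ne0_noncollinear[OF c(1)] cr_ne0_noncollinear[OF c(2)]
      cr_ne0_noncollinear[OF c(3)] cr_ne0_noncollinear[OF c(4)] cr_ne0_noncollinear[OF c(5)]
    by auto
qed

lemma affine_fun_iff: "affine_fun \<phi> \<longleftrightarrow> (\<exists>a c. \<forall>x. \<phi> x = a \<bullet> x + c)"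
  unfolding affine_fun_def by (auto simp: fun_eq_iff)

lemma affine_fun_add: "affine_fun f \<Longrightarrow> affine_fun g \<Longrightarrow> affine_fun (\<lambda>x. f x + g x)"
  unfolding affine_fun_iff
proof (elim exE)
  fix a c a' c' assume "\<forall>x. f x = a \<bullet> x + c" "\<forall>x. g x = a' \<bullet> x + c'"
  then have "\<forall>x. f x + g x = (a + a') \<bullet> x + (c + c')" by (simp add: inner_add_left)
  then show "\<exists>a c. \<forall>x. f x + g x = a \<bullet> x + c" by blast
qed

lemma affine_fun_scale: "affine_fun f \<Longrightarrow> affine_fun (\<lambda>x. k * f x)"
  unfolding affine_fun_iff
proof (elim exE)
  fix a c assume "\<forall>x. f x = a \<bullet> x + c"
  then have "\<forall>x. k * f x = (k *\<^sub>R a) \<bullet> x + k * c" by (simp add: algebra_simps)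
  then show "\<exists>a c. \<forall>x. k * f x = a \<bullet> x + c" by blast
qed

lemma affine_fun_const: "affine_fun (\<lambda>x. k)"
  unfolding affine_fun_iff by (rule exI[of _ 0]) simp

lemma affine_fun_comp: "affine_fun (\<lambda>x::pt. x$i)"
  unfolding affine_fun_iff
  by (rule exI[of _ "axis i 1"], rule exI[of _ 0]) (simp add: inner_axis')

lemma affine_fun_diff: "affine_fun f \<Longrightarrow> affine_fun g \<Longrightarrow> affine_fun (\<lambda>x. f x - g x)"
  using affine_fun_add[of f "\<lambda>x. (-1) * g x"] affine_fun_scale[of g "-1"] by simp

lemma affine_comb:
  assumes "affine_fun \<phi>" "u + v + w = 1"
  shows "\<phi> (u *\<^sub>R a + v *\<^sub>R b + w *\<^sub>R c) = u * \<phi> a + v * \<phi> b + w * \<phi> c"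
proof -
  obtain p q where e: "\<And>x. \<phi> x = p \<bullet> x + q" using assms(1) unfolding affine_fun_iff by blast
  have "q = u * q + v * q + w * q" using assms(2) by (metis distrib_right mult_1)
  then show ?thesis unfolding e by (simp add: inner_add_right algebra_simps)
qed

lemma affine_comb2:
  assumes "affine_fun \<phi>"
  shows "\<phi> ((1 - u) *\<^sub>R a + u *\<^sub>R b) = (1 - u) * \<phi> a + u * \<phi> b"
  using affine_comb[OF assms, of "1-u" u 0 a b a] by simp

lemma aff0:
  assumes "affine_fun \<phi>" "\<not> collinear {N, A, B}" "\<phi> N = 0" "\<phi> A = 0" "\<phi> B = 0"
  shows "\<phi> x = 0"
proof -
  obtain p q where e: "\<And>x. \<phi> x = p \<bullet> x + q" using assms(1) unfolding affine_fun_iff by blast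
  have d: "cr (A - N) (B - N) \<noteq> 0" using cr_ne0_any[OF assms(2)] by simp
  have h1: "p \<bullet> (A - N) = 0" using assms e by (simp add: inner_diff_right)
  have h2: "p \<bullet> (B - N) = 0" using assms e by (simp add: inner_diff_right)
  define u where "u = A - N" define v where "v = B - N"
  have h1': "p$1 * u$1 + p$2 * u$2 = 0" using h1 by (simp add: inner2 u_def)
  have h2': "p$1 * v$1 + p$2 * v$2 = 0" using h2 by (simp add: inner2 v_def)
  have d': "u$1 * v$2 - u$2 * v$1 \<noteq> 0" using d by (simp add: cr_def u_def v_def)
  have "p$1 * (u$1 * v$2 - u$2 * v$1) = 0" using h1' h2' by algebra
  then have p1: "p$1 = 0" using d' by simp
  have "p$2 * (u$1 * v$2 - u$2 * v$1) = 0" using h1' h2' by algebra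
  then have p2: "p$2 = 0" using d' by simp
  have "p = 0" using p1 p2 by (simp add: vec2_eq)
  then show ?thesis using e assms(3) by simp
qed

definition rot :: "pt \<Rightarrow> pt" where "rot d = (\<chi> i. if i = 1 then - d$2 else d$1)"

lemma rot_nth[simp]: "rot d $ 1 = - d$2" "rot d $ 2 = d$1"
  by (simp_all add: rot_def)

lemma cr_rot: "cr d v = rot d \<bullet> v"
  by (simp add: cr_def inner2)

definition hf :: "pt \<Rightarrow> pt \<Rightarrow> pt \<Rightarrow> pt \<Rightarrow> real" where
  "hf N A B = (\<lambda>x. cr (A - N) (x - N) / cr (A - N) (B - N))"

lemma hf_affine: "affine_fun (hf N A B)"
proof -
  have "\<forall>x. hf N A B x = ((1 / cr (A - N) (B - N)) *\<^sub>R rot (A - N)) \<bullet> x + (- cr (A - N) N / cr (A - N) (B - N))"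
    by (simp add: hf_def cr_rot inner_diff_right divide_simps)
  then show ?thesis unfolding affine_fun_iff by blast
qed

lemma hf_vals:
  assumes "\<not> collinear {N, A, B}"
  shows "hf N A B N = 0" "hf N A B A = 0" "hf N A B B = 1"
  using cr_ne0_any[OF assms] by (simp_all add: hf_def cr_def)

lemma hat_eq:
  assumes "\<not> collinear {N, A, B}"
  shows "hat {N, A, B} B = hf N A B"
  unfolding hat_def
proof (rule the_equality)
  have d: "N \<noteq> A" "N \<noteq> B" "A \<noteq> B" using noncol_distinct[OF assms] by auto
  show "affine_fun (hf N A B) \<and> hf N A B B = 1 \<and> (\<forall>M'\<in>{N, A, B} - {B}. hf N A B M' = 0)"
    using hf_affine hf_vals[OF assms] by auto
next
  fix \<phi> assume h: "affine_fun \<phi> \<and> \<phi> B = 1 \<and> (\<forall>M'\<in>{N, A, B} - {B}. \<phi> M' = 0)"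
  have d: "N \<noteq> A" "N \<noteq> B" "A \<noteq> B" using noncol_distinct[OF assms] by auto
  have "\<phi> x - hf N A B x = 0" for x
    apply (rule aff0[OF affine_fun_diff assms])
    using h hf_affine hf_vals[OF assms] d by auto
  then show "\<phi> = hf N A B" by auto
qed

lemma tri3:
  assumes "triangle K" "N \<in> K"
  shows "\<exists>A B. K = {N, A, B} \<and> \<not> collinear {N, A, B}"
proof -
  obtain x y z where K: "K = {x,y,z}" using assms(1) unfolding triangle_def card_3_iff by blast
  have nc: "\<not> collinear K" using assms(1) triangle_def by blast
  show ?thesis
  proof (cases "N = x")
    case True then show ?thesis using K nc by blast
  next
    case False
    show ?thesis
    proof (cases "N = y")
      case True
      have "K = {N, x, z}" using K True by auto
      then show ?thesis using nc by auto
    next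
      case False
      then have "N = z" using \<open>N \<noteq> x\<close> assms(2) K by auto
      then have "K = {N, x, y}" using K by auto
      then show ?thesis using nc by auto
    qed
  qed
qed

lemma hat_props:
  assumes "triangle K" "M \<in> K"
  shows "affine_fun (hat K M)" "hat K M M = 1" "\<And>M'. M' \<in> K \<Longrightarrow> M' \<noteq> M \<Longrightarrow> hat K M M' = 0"
proof -
  obtain A B where K: "K = {M, A, B}" and nc: "\<not> collinear {M, A, B}" using tri3[OF assms] by blast
  have nc': "\<not> collinear {A, B, M}" using nc by (simp add: insert_commute)
  have K': "K = {A, B, M}" using K by (simp add: insert_commute)
  have e: "hat K M = hf A B M" using hat_eq[OF nc'] K' by simp
  show "affine_fun (hat K M)" using e hf_affine by simp
  show "hat K M M = 1" using e hf_vals[OF nc'] by simp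
  show "\<And>M'. M' \<in> K \<Longrightarrow> M' \<noteq> M \<Longrightarrow> hat K M M' = 0" using e hf_vals[OF nc'] K by auto
qed

lemma tri_of: "\<not> collinear {N, A, B} \<Longrightarrow> triangle {N, A, B}"
  unfolding triangle_def using noncol_distinct[of N A B] by auto

lemma hat_sum:
  assumes nc: "\<not> collinear {N, A, B}" and K: "K = {N, A, B}"
  shows "hat K N x + hat K A x + hat K B x = 1"
proof -
  have t: "triangle K" using tri_of[OF nc] K by simp
  have d: "N \<noteq> A" "N \<noteq> B" "A \<noteq> B" using noncol_distinct[OF nc] by auto
  note hN = hat_props[OF t, of N] and hA = hat_props[OF t, of A] and hB = hat_props[OF t, of B]
  have "hat K N x + hat K A x + hat K B x - 1 = 0"
    apply (rule aff0[OF _ nc])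
    using hN hA hB d K by (auto intro!: affine_fun_diff affine_fun_add affine_fun_const)
  then show ?thesis by simp
qed

lemma hat_decomp:
  assumes nc: "\<not> collinear {N, A, B}" and K: "K = {N, A, B}"
  shows "x = hat K N x *\<^sub>R N + hat K A x *\<^sub>R A + hat K B x *\<^sub>R B"
proof -
  have t: "triangle K" using tri_of[OF nc] K by simp
  have d: "N \<noteq> A" "N \<noteq> B" "A \<noteq> B" using noncol_distinct[OF nc] by auto
  note hN = hat_props[OF t, of N] and hA = hat_props[OF t, of A] and hB = hat_props[OF t, of B]
  have af: "affine_fun (\<lambda>x. N$i * hat K N x)" "affine_fun (\<lambda>x. A$i * hat K A x)"
     "affine_fun (\<lambda>x. B$i * hat K B x)" for i
    using hN hA hB K by (auto intro!: affine_fun_scale)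
  have "N$i * hat K N x + A$i * hat K A x + B$i * hat K B x - x$i = 0" for i
    apply (rule aff0[OF _ nc])
    using af hN hA hB d K by (auto intro!: affine_fun_diff affine_fun_add affine_fun_comp)
  then show ?thesis by (simp add: vec_eq_iff algebra_simps)
qed

lemma hat_at_comb:
  assumes nc: "\<not> collinear {N, A, B}" and K: "K = {N, A, B}" and s: "u + v + w = 1"
  shows "hat K N (u *\<^sub>R N + v *\<^sub>R A + w *\<^sub>R B) = u"
proof -
  have t: "triangle K" using tri_of[OF nc] K by simp
  have d: "N \<noteq> A" "N \<noteq> B" "A \<noteq> B" using noncol_distinct[OF nc] by auto
  show ?thesis using affine_comb[OF hat_props(1)[OF t] s] hat_props[OF t, of N] d K by simp
qed

lemma conv_char:
  assumes nc: "\<not> collinear {N, A, B}" and K: "K = {N, A, B}"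
  shows "x \<in> convex hull K \<longleftrightarrow> 0 \<le> hat K N x \<and> 0 \<le> hat K A x \<and> 0 \<le> hat K B x"
proof
  assume "x \<in> convex hull K"
  then obtain u v w where x: "x = u *\<^sub>R N + v *\<^sub>R A + w *\<^sub>R B" and uvw: "0 \<le> u" "0 \<le> v" "0 \<le> w" "u + v + w = 1"
    unfolding K convex_hull_3 by blast
  have ncA: "\<not> collinear {A, B, N}" and KA: "K = {A, B, N}" using nc K by (auto simp: insert_commute)
  have ncB: "\<not> collinear {B, N, A}" and KB: "K = {B, N, A}" using nc K by (auto simp: insert_commute)
  have "hat K N x = u" using hat_at_comb[OF nc K uvw(4)] x by simp
  moreover have "hat K A x = v"
    using hat_at_comb[OF ncA KA, of v w u] uvw(4) x by (simp add: algebra_simps)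
  moreover have "hat K B x = w"
    using hat_at_comb[OF ncB KB, of w u v] uvw(4) x by (simp add: algebra_simps)
  ultimately show "0 \<le> hat K N x \<and> 0 \<le> hat K A x \<and> 0 \<le> hat K B x" using uvw by simp
next
  assume h: "0 \<le> hat K N x \<and> 0 \<le> hat K A x \<and> 0 \<le> hat K B x"
  show "x \<in> convex hull K"
    unfolding K convex_hull_3
    using h hat_sum[OF nc K, of x] hat_decomp[OF nc K, of x] by blast
qed

lemma conf_sub: "conforming T0 \<Longrightarrow> T \<subseteq> T0 \<Longrightarrow> conforming T"
proof -
  assume a: "conforming T0" "T \<subseteq> T0"
  have "finite T" using a finite_subset unfolding conforming_def by blast
  moreover have "\<forall>K\<in>T. triangle K" using a unfolding conforming_def by blast
  moreover have "\<forall>K\<in>T. \<forall>K'\<in>T. K \<noteq> K' \<longrightarrow> convex hull K \<inter> convex hull K' = convex hull (K \<inter> K')"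
    using a unfolding conforming_def by blast
  ultimately show ?thesis unfolding conforming_def by blast
qed

lemma conf_tri: "conforming T \<Longrightarrow> K \<in> T \<Longrightarrow> triangle K"
  unfolding conforming_def by blast

lemma conf_int: "conforming T \<Longrightarrow> K \<in> T \<Longrightarrow> K' \<in> T \<Longrightarrow> K \<noteq> K' \<Longrightarrow>
    convex hull K \<inter> convex hull K' = convex hull (K \<inter> K')"
  unfolding conforming_def by blast

lemma tri_edge:
  assumes "triangle K" "P \<in> K" "Q \<in> K" "P \<noteq> Q"
  shows "\<exists>C. K = {P, Q, C} \<and> \<not> collinear {P, Q, C}"
proof -
  obtain A B where K: "K = {P, A, B}" and nc: "\<not> collinear {P, A, B}" using tri3[OF assms(1,2)] by blast
  show ?thesis
  proof (cases "Q = A")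
    case True then show ?thesis using K nc by blast
  next
    case False
    then have "Q = B" using assms K by auto
    then have "K = {P, Q, A}" using K by auto
    moreover have "\<not> collinear {P, Q, A}" using nc \<open>Q = B\<close> by (simp add: insert_commute)
    ultimately show ?thesis by blast
  qed
qed

lemma hat_rel:
  assumes nc: "\<not> collinear {N, B, A}" and nc': "\<not> collinear {N, B, E}"
  shows "hat {N, B, E} E x = hat {N, B, E} E A * hat {N, B, A} A x"
proof -
  have t: "triangle {N, B, A}" "triangle {N, B, E}" using tri_of nc nc' by auto
  have d: "N \<noteq> B" "N \<noteq> A" "B \<noteq> A" "N \<noteq> E" "B \<noteq> E" using noncol_distinct[OF nc] noncol_distinct[OF nc'] by auto
  have "hat {N, B, E} E x - hat {N, B, E} E A * hat {N, B, A} A x = 0"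
    apply (rule aff0[OF _ nc])
    using hat_props[OF t(1), of A] hat_props[OF t(2), of E] d
    by (auto intro!: affine_fun_diff affine_fun_scale)
  then show ?thesis by simp
qed

lemma opposite:
  assumes conf: "conforming T" and KT: "{N, B, A} \<in> T" "{N, B, E} \<in> T" and ne: "{N, B, A} \<noteq> {N, B, E}"
    and nc: "\<not> collinear {N, B, A}" and nc': "\<not> collinear {N, B, E}"
  shows "hat {N, B, E} E A < 0"
proof (rule ccontr)
  define K where "K = {N, B, A}" define K' where "K' = {N, B, E}"
  assume "\<not> hat {N, B, E} E A < 0"
  then have ge: "hat K' E A \<ge> 0" by (simp add: K'_def)
  have t: "triangle K" "triangle K'" using tri_of nc nc' K_def K'_def by auto
  have d: "N \<noteq> B" "N \<noteq> A" "B \<noteq> A" "N \<noteq> E" "B \<noteq> E" using noncol_distinct[OF nc] noncol_distinct[OF nc'] by auto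
  have AE: "A \<noteq> E" using ne by auto
  note hE = hat_props[OF t(2), of E, unfolded K'_def]
  have hE0: "hat K' E N = 0" "hat K' E B = 0" using hE d by (auto simp: K'_def)
  show False
  proof (cases "hat K' E A = 0")
    case True
    have "hat K' E x = 0" for x
      apply (rule aff0[OF _ nc]) using hE True hE0 by (auto simp: K'_def)
    then show False using hE by (simp add: K'_def)
  next
    case False
    then have pos: "hat K' E A > 0" using ge by simp
    define a where "a = \<bar>hat K' N A\<bar>" define b where "b = \<bar>hat K' B A\<bar>"
    define s where "s = 1 / (2 * (1 + a + b))"
    have ab: "a \<ge> 0" "b \<ge> 0" by (auto simp: a_def b_def)
    have s0: "s > 0" using ab by (simp add: s_def)
    have s2: "2 * s * (1 + a + b) = 1" using ab by (simp add: s_def)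
    have s2': "s + s * a + s * b = 1 / 2" using s2 by (simp add: algebra_simps)
    have sab: "s * a \<ge> 0" "s * b \<ge> 0" using s0 ab by auto
    have s1: "s \<le> 1" using s2' sab by linarith
    define p where "p = ((1 - s) / 2) *\<^sub>R N + ((1 - s) / 2) *\<^sub>R B + s *\<^sub>R A"
    have sum: "(1 - s) / 2 + (1 - s) / 2 + s = 1" by simp
    have pK: "p \<in> convex hull K"
      unfolding K_def convex_hull_3 p_def using s0 s1
      by (intro CollectI exI[of _ "(1 - s) / 2"] exI[of _ s]) auto
    have tK': "triangle K'" by (rule t(2))
    note hN' = hat_props[OF tK', of N] and hB' = hat_props[OF tK', of B]
    have vN: "hat K' N p = (1 - s) / 2 + s * hat K' N A"
      using affine_comb[OF hN'(1) sum, of N B A] hN' d unfolding p_def by (simp add: K'_def)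
    have vB: "hat K' B p = (1 - s) / 2 + s * hat K' B A"
      using affine_comb[OF hB'(1) sum, of N B A] hB' d unfolding p_def by (simp add: K'_def)
    have vE: "hat K' E p = s * hat K' E A"
      using affine_comb[OF hE(1) sum, of N B A] hE0 unfolding p_def by (simp add: K'_def)
    have "- a \<le> hat K' N A" unfolding a_def by (simp add: abs_if)
    from mult_left_mono[OF this, of s] s0 have "s * hat K' N A \<ge> - (s * a)" by simp
    moreover have "- b \<le> hat K' B A" unfolding b_def by (simp add: abs_if)
    from mult_left_mono[OF this, of s] s0 have "s * hat K' B A \<ge> - (s * b)" by simp
    moreover have "hat K' N p = 1/2 - s/2 + s * hat K' N A" "hat K' B p = 1/2 - s/2 + s * hat K' B A"
      using vN vB by (simp_all add: diff_divide_distrib)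
    ultimately have g1: "hat K' N p \<ge> 0 \<and> hat K' B p \<ge> 0" using s2' sab s0 by (intro conjI; linarith)
    have g3: "hat K' E p > 0" using vE s0 pos by simp
    have nc'': "\<not> collinear {N, B, E}" by (rule nc')
    have pK': "p \<in> convex hull K'"
      using conv_char[OF nc'' K'_def] g1 g3 by simp
    have KK: "K \<inter> K' = {N, B}" using d AE by (auto simp: K_def K'_def)
    have "p \<in> convex hull {N, B}"
      using conf_int[OF conf, of K K'] KT ne pK pK' KK by (auto simp: K_def K'_def)
    then obtain u v where p2: "p = u *\<^sub>R N + v *\<^sub>R B" "u + v = 1" unfolding convex_hull_2 by blast
    have "hat K' E p = 0"
      using affine_comb[OF hE(1), of u v 0 N B E] p2 hE0 by (simp add: K'_def)
    then show False using g3 by simp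
  qed
qed

lemma at_most_two:
  assumes conf: "conforming T" and KT: "K1 \<in> T" "K2 \<in> T" "K3 \<in> T"
    and ne: "K1 \<noteq> K2" "K1 \<noteq> K3" "K2 \<noteq> K3"
    and sub: "{P, Q} \<subseteq> K1" "{P, Q} \<subseteq> K2" "{P, Q} \<subseteq> K3" and PQ: "P \<noteq> Q"
  shows False
proof -
  obtain C1 where K1: "K1 = {P, Q, C1}" and n1: "\<not> collinear {P, Q, C1}"
    using tri_edge[OF conf_tri[OF conf KT(1)], of P Q] sub PQ by auto
  obtain C2 where K2: "K2 = {P, Q, C2}" and n2: "\<not> collinear {P, Q, C2}"
    using tri_edge[OF conf_tri[OF conf KT(2)], of P Q] sub PQ by auto
  obtain C3 where K3: "K3 = {P, Q, C3}" and n3: "\<not> collinear {P, Q, C3}"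
    using tri_edge[OF conf_tri[OF conf KT(3)], of P Q] sub PQ by auto
  have a: "hat {P, Q, C2} C2 C1 < 0"
    by (rule opposite[OF conf]) (use KT ne K1 K2 n1 n2 in auto)
  have b: "hat {P, Q, C3} C3 C1 < 0"
    by (rule opposite[OF conf]) (use KT ne K1 K3 n1 n3 in auto)
  have c: "hat {P, Q, C3} C3 C2 < 0"
    by (rule opposite[OF conf]) (use KT ne K2 K3 n2 n3 in auto)
  have "hat {P, Q, C3} C3 C1 = hat {P, Q, C3} C3 C2 * hat {P, Q, C2} C2 C1"
    by (rule hat_rel[OF n2 n3])
  also have "\<dots> > 0" using a c by (simp add: mult_neg_neg)
  finally show False using b by simp
qed

lemma Km_props:
  assumes conf: "conforming T" and F: "F \<in> interior_edges T" and Kp: "Kp F \<in> T" "F \<subseteq> Kp F"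
  shows "Km T Kp F \<in> T" "F \<subseteq> Km T Kp F" "Km T Kp F \<noteq> Kp F"
    "\<And>K. K \<in> T \<Longrightarrow> F \<subseteq> K \<Longrightarrow> K = Kp F \<or> K = Km T Kp F"
proof -
  obtain K1 K2 where k: "K1 \<in> T" "K2 \<in> T" "K1 \<noteq> K2" "F \<subseteq> K1" "F \<subseteq> K2" and c2: "card F = 2"
    using F unfolding interior_edges_def by blast
  obtain P Q where PQ: "F = {P, Q}" "P \<noteq> Q" using c2 unfolding card_2_iff by blast
  obtain K' where K': "K' \<in> T" "K' \<noteq> Kp F" "F \<subseteq> K'"
  proof (cases "K1 = Kp F")
    case True then show ?thesis using that[of K2] k by simp
  next
    case False then show ?thesis using that[of K1] k by simp
  qed
  have uniq: "K'' = K'" if "K'' \<in> T" "F \<subseteq> K''" "K'' \<noteq> Kp F" for K''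
  proof (rule ccontr)
    assume "K'' \<noteq> K'"
    show False
      using at_most_two[OF conf Kp(1) K'(1) that(1), of P Q] K' that Kp PQ \<open>K'' \<noteq> K'\<close> by simp
  qed
  have e: "Km T Kp F = K'"
    unfolding Km_def by (rule the_equality) (use K' uniq in blast)+
  show "Km T Kp F \<in> T" "F \<subseteq> Km T Kp F" "Km T Kp F \<noteq> Kp F" using e K' by auto
  show "\<And>K. K \<in> T \<Longrightarrow> F \<subseteq> K \<Longrightarrow> K = Kp F \<or> K = Km T Kp F" using e uniq by blast
qed


lemma norm2: "norm (d::pt) = sqrt (d$1 * d$1 + d$2 * d$2)"
  by (simp add: norm_eq_sqrt_inner inner2)

lemma rot_perp_repr:
  assumes "n \<bullet> d = 0" "d \<noteq> 0"
  shows "n = (cr d n / (d \<bullet> d)) *\<^sub>R rot d"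
proof -
  have dd: "d$1 * d$1 + d$2 * d$2 \<noteq> 0" using assms(2) by (simp add: vec2_eq sum_squares_eq_zero_iff)
  have h: "n$1 * d$1 + n$2 * d$2 = 0" using assms(1) by (simp add: inner2)
  have e1: "(d$1 * n$2 - d$2 * n$1) * (- d$2) = n$1 * (d$1 * d$1 + d$2 * d$2)" using h by algebra
  have e2: "(d$1 * n$2 - d$2 * n$1) * d$1 = n$2 * (d$1 * d$1 + d$2 * d$2)" using h by algebra
  show ?thesis unfolding vec2_eq using dd e1 e2 by (simp add: cr_def inner2 field_simps)
qed

lemma cr_rot_self: "cr d (rot d) = d$1 * d$1 + d$2 * d$2"
  by (simp add: cr_def)

lemma rot_inner_self: "rot d \<bullet> d = 0"
  by (simp add: inner2)

lemma norm_rot: "norm (rot d) = norm d"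
  by (simp add: norm2 algebra_simps)

lemma nF_val:
  assumes F: "F = {N, A}" and KpF: "Kp F = {N, A, C}" and nc: "\<not> collinear {N, A, C}"
  shows "nF Kp F = ((if cr (A - N) (C - N) < 0 then 1 else -1) / norm (A - N)) *\<^sub>R rot (A - N)"
proof -
  define d where "d = A - N"
  define c where "c = cr d (C - N)"
  define k0 where "k0 = (if c < 0 then 1 else -1) / norm d"
  have d: "N \<noteq> A" "N \<noteq> C" "A \<noteq> C" using noncol_distinct[OF nc] by auto
  have d0: "d \<noteq> 0" using d by (simp add: d_def)
  have c0: "c \<noteq> 0" using cr_ne0_any[OF nc] by (simp add: c_def d_def)
  have nd: "norm d > 0" using d0 by simp
  have KF: "Kp F - F = {C}" using KpF F d by auto
  let ?P = "\<lambda>n. norm n = 1 \<and> (\<forall>x\<in>F. \<forall>y\<in>F. n \<bullet> (x - y) = 0) \<and> (\<forall>x\<in>F. \<forall>z\<in>Kp F - F. n \<bullet> (z - x) < 0)"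
  have Pchar: "?P n \<longleftrightarrow> norm n = 1 \<and> n \<bullet> d = 0 \<and> n \<bullet> (C - N) < 0" for n
  proof -
    have a1: "n \<bullet> (A - N) = n \<bullet> d" by (simp add: d_def)
    have a2: "n \<bullet> (N - A) = - (n \<bullet> d)" by (simp add: d_def inner_diff_right)
    have a3: "n \<bullet> (C - A) = n \<bullet> (C - N) - n \<bullet> d" by (simp add: d_def inner_diff_right)
    show ?thesis by (simp only: KF) (auto simp: F a1 a2 a3)
  qed
  have n0: "?P (k0 *\<^sub>R rot d)"
  proof -
    have "norm (k0 *\<^sub>R rot d) = 1" using nd by (simp add: k0_def norm_rot)
    moreover have "(k0 *\<^sub>R rot d) \<bullet> d = 0" by (simp add: rot_inner_self)
    moreover have "(k0 *\<^sub>R rot d) \<bullet> (C - N) = k0 * c" by (simp add: c_def cr_rot)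
    moreover have "k0 * c = - \<bar>c\<bar> / norm d" by (simp add: k0_def abs_if)
    moreover have "- \<bar>c\<bar> / norm d < 0" using nd c0 by simp
    ultimately show ?thesis unfolding Pchar by simp
  qed
  have uniq: "n = k0 *\<^sub>R rot d" if "?P n" for n
  proof -
    have h: "norm n = 1" "n \<bullet> d = 0" "n \<bullet> (C - N) < 0" using that Pchar by auto
    define k where "k = cr d n / (d \<bullet> d)"
    have nk: "n = k *\<^sub>R rot d" using rot_perp_repr[OF h(2) d0] by (simp add: k_def)
    have "\<bar>k\<bar> * norm d = 1" using h(1) nk by (simp add: norm_rot)
    then have ak: "\<bar>k\<bar> = 1 / norm d" using nd by (simp add: field_simps)
    have "k * c < 0" using h(3) nk by (simp add: c_def cr_rot)
    then have "k = k0" using ak c0 nd by (auto simp: k0_def mult_less_0_iff abs_if split: if_splits)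
    then show ?thesis using nk by simp
  qed
  have "nF Kp F = k0 *\<^sub>R rot d"
    unfolding nF_def by (rule the_equality[where P="?P"]) (use n0 uniq in auto)
  then show ?thesis by (simp add: k0_def c_def d_def)
qed

lemma sgn_ccw_val:
  assumes F: "F = {N, A}" and KpF: "Kp F = {N, A, C}" and nc: "\<not> collinear {N, A, C}"
  shows "sgn_ccw Kp N F = (if cr (A - N) (C - N) < 0 then 1 else -1)"
proof -
  have d: "N \<noteq> A" using noncol_distinct[OF nc] by auto
  have "F - {N} = {A}" using F d by blast
  then have te: "the_elem (F - {N}) = A" by simp
  define d where "d = A - N"
  have nd: "norm d > 0" using d by (simp add: d_def)
  have "sqrt (d$1 * d$1 + d$2 * d$2) > 0" using nd norm2[of d] by simp
  then have dd: "d$1 * d$1 + d$2 * d$2 > 0" by simp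
  have e: "d $ 1 * nF Kp F $ 2 - d $ 2 * nF Kp F $ 1 = cr d (nF Kp F)" by (simp add: cr_def)
  have n: "nF Kp F = ((if cr d (C - N) < 0 then 1 else -1) / norm d) *\<^sub>R rot d"
    using nF_val[where Kp=Kp and F=F, OF F KpF nc] by (simp add: d_def)
  have crs: "cr u (k *\<^sub>R v) = k * cr u v" for u v k by (simp add: cr_def algebra_simps)
  have ee: "cr d (nF Kp F) = ((if cr d (C - N) < 0 then 1 else -1) / norm d) * (d$1 * d$1 + d$2 * d$2)"
    unfolding n crs cr_rot_self ..
  show ?thesis
  proof (cases "cr d (C - N) < 0")
    case True
    then have "cr d (nF Kp F) > 0" using ee dd nd by simp
    then have h: "(A - N)$1 * nF Kp F $2 - (A - N)$2 * nF Kp F $1 > 0" by (simp only: cr_def d_def)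
    show ?thesis unfolding sgn_ccw_def Let_def te using h True by (simp add: d_def)
  next
    case False
    then have "cr d (nF Kp F) < 0" using ee dd nd by simp
    then have h: "(A - N)$1 * nF Kp F $2 - (A - N)$2 * nF Kp F $1 < 0" by (simp only: cr_def d_def)
    show ?thesis unfolding sgn_ccw_def Let_def te using h False by (simp add: d_def)
  qed
qed

definition eps :: "(vset \<Rightarrow> vset) \<Rightarrow> vset \<Rightarrow> vset \<Rightarrow> real" where
  "eps Kp K F = (if Kp F = K then 1 else -1)"

lemma finite_IE: "conforming T \<Longrightarrow> finite (interior_edges T)"
proof -
  assume c: "conforming T"
  have fT: "finite T" using c unfolding conforming_def by blast
  have fK: "finite K" if "K \<in> T" for K
    using conf_tri[OF c that] unfolding triangle_def by (auto intro: card_ge_0_finite)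
  have "interior_edges T \<subseteq> Pow (\<Union>T)" unfolding interior_edges_def by blast
  moreover have "finite (Pow (\<Union>T))" using fT fK by simp
  ultimately show ?thesis by (rule finite_subset)
qed

lemma jump_hatchi:
  assumes conf: "conforming T" and Kp: "\<forall>F \<in> interior_edges T. Kp F \<in> T \<and> F \<subseteq> Kp F"
    and F: "F \<in> interior_edges T" and K: "K \<in> T" and M: "M \<in> K" and M': "M' \<in> F"
  shows "jump T Kp (hatchi K M) F M' = (if F \<subseteq> K then eps Kp K F * (if M' = M then 1 else 0) else 0)"
proof -
  have kp: "Kp F \<in> T" "F \<subseteq> Kp F" using Kp F by auto
  note km = Km_props[where Kp=Kp and F=F, OF conf F kp]
  have t: "triangle K" using conf_tri[OF conf K] .
  show ?thesis
  proof (cases "F \<subseteq> K")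
    case True
    have hv: "hat K M M' = (if M' = M then 1 else 0)"
      using hat_props[OF t M] M' True by auto
    have "K = Kp F \<or> K = Km T Kp F" using km(4)[OF K True] .
    then show ?thesis using km(3) hv True
      unfolding jump_def hatchi_def eps_def by auto
  next
    case False
    have "Kp F \<noteq> K" "Km T Kp F \<noteq> K" using False kp km(2) by auto
    then show ?thesis using False unfolding jump_def hatchi_def by auto
  qed
qed

lemma BF:
  assumes conf: "conforming T" and Kp: "\<forall>F \<in> interior_edges T. Kp F \<in> T \<and> F \<subseteq> Kp F"
    and K: "K \<in> T" and M: "M \<in> K"
  shows "bform T Kp \<mu> (hatchi K M) =
     (\<Sum>F\<in>{F \<in> interior_edges T. F \<subseteq> K \<and> M \<in> F}. diameter F / 2 * eps Kp K F * \<mu> F M)"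
proof -
  have fin: "finite (interior_edges T)" by (rule finite_IE[OF conf])
  have inner: "(\<Sum>M'\<in>F. \<mu> F M' * jump T Kp (hatchi K M) F M') =
      (if F \<subseteq> K \<and> M \<in> F then eps Kp K F * \<mu> F M else 0)" if F: "F \<in> interior_edges T" for F
  proof -
    have fF: "finite F" using F unfolding interior_edges_def by (auto intro: card_ge_0_finite)
    have "(\<Sum>M'\<in>F. \<mu> F M' * jump T Kp (hatchi K M) F M') =
          (\<Sum>M'\<in>F. if F \<subseteq> K then (if M' = M then eps Kp K F * \<mu> F M' else 0) else 0)"
      by (rule sum.cong) (auto simp: jump_hatchi[OF conf Kp F K M])
    also have "\<dots> = (if F \<subseteq> K \<and> M \<in> F then eps Kp K F * \<mu> F M else 0)"
      using fF by (cases "F \<subseteq> K") (simp_all add: sum.delta sum.delta')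
    finally show ?thesis .
  qed
  have "bform T Kp \<mu> (hatchi K M) = (\<Sum>F\<in>interior_edges T.
      (if F \<subseteq> K \<and> M \<in> F then diameter F / 2 * eps Kp K F * \<mu> F M else 0))"
    unfolding bform_def by (rule sum.cong) (auto simp: inner)
  also have "\<dots> = (\<Sum>F\<in>{F \<in> interior_edges T. F \<subseteq> K \<and> M \<in> F}. diameter F / 2 * eps Kp K F * \<mu> F M)"
    by (simp only: sum.inter_filter[OF fin])
  finally show ?thesis .
qed

lemma eps_sgn:
  assumes conf: "conforming T" and Kp: "\<forall>F \<in> interior_edges T. Kp F \<in> T \<and> F \<subseteq> Kp F"
    and KT: "{N, A, B} \<in> T" and nc: "\<not> collinear {N, A, B}" and F: "{N, A} \<in> interior_edges T"
  shows "eps Kp {N, A, B} {N, A} * sgn_ccw Kp N {N, A} = (if cr (A - N) (B - N) < 0 then 1 else -1)"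
proof -
  have d: "N \<noteq> A" "N \<noteq> B" "A \<noteq> B" using noncol_distinct[OF nc] by auto
  have kp: "Kp {N, A} \<in> T" "{N, A} \<subseteq> Kp {N, A}" using Kp F by auto
  obtain C where C: "Kp {N, A} = {N, A, C}" and ncC: "\<not> collinear {N, A, C}"
    using tri_edge[OF conf_tri[OF conf kp(1)], of N A] kp d by auto
  have dC: "C \<noteq> N" "C \<noteq> A" using noncol_distinct[OF ncC] by auto
  have sg: "sgn_ccw Kp N {N, A} = (if cr (A - N) (C - N) < 0 then 1 else -1)"
    by (rule sgn_ccw_val[where Kp=Kp and F="{N, A}", OF refl C ncC])
  have c0: "cr (A - N) (B - N) \<noteq> 0" "cr (A - N) (C - N) \<noteq> 0"
    using cr_ne0_any[OF nc] cr_ne0_any[OF ncC] by auto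
  show ?thesis
  proof (cases "Kp {N, A} = {N, A, B}")
    case True
    then have "C \<in> {N, A, B}" using C by auto
    then have "C = B" using dC by auto
    then show ?thesis using True sg by (simp add: eps_def)
  next
    case False
    have kpC: "{N, A, C} \<in> T" using kp(1) C by simp
    have ne: "{N, A, B} \<noteq> {N, A, C}" using False C by simp
    have "hat {N, A, C} C B < 0"
      by (rule opposite[OF conf KT kpC ne nc ncC])
    then have "cr (A - N) (B - N) / cr (A - N) (C - N) < 0"
      using hat_eq[OF ncC] by (simp add: hf_def)
    then have "cr (A - N) (B - N) < 0 \<longleftrightarrow> \<not> cr (A - N) (C - N) < 0"
      using c0 by (auto simp: divide_less_0_iff)
    then show ?thesis using False sg C c0 by (auto simp: eps_def)
  qed
qed

definition yv :: "(vset \<Rightarrow> vset) \<Rightarrow> (vset \<Rightarrow> pt \<Rightarrow> real) \<Rightarrow> pt \<Rightarrow> vset \<Rightarrow> real" where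
  "yv Kp \<mu> N G = sgn_ccw Kp N G * diameter G * \<mu> G N"

lemma sgn_sq: "sgn_ccw Kp N F * sgn_ccw Kp N F = 1"
  unfolding sgn_ccw_def Let_def by simp

lemma edges_at:
  assumes "card F = 2" "F \<subseteq> {N, A, B}" "N \<in> F"
  shows "F = {N, A} \<or> F = {N, B}"
proof -
  obtain x y where F: "F = {x, y}" "x \<noteq> y" using assms(1) unfolding card_2_iff by blast
  obtain z where z: "F = {N, z}" "z \<noteq> N"
  proof (cases "x = N")
    case True then show ?thesis using that[of y] F by auto
  next
    case False then have "y = N" using assms(3) F by auto
    then show ?thesis using that[of x] F False by auto
  qed
  have "z \<in> {A, B}" using z assms(2) by auto
  then show ?thesis using z by auto
qed

lemma term_eq:
  assumes e: "eps Kp K G * sgn_ccw Kp N G = g"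
  shows "diameter G / 2 * eps Kp K G * \<mu> G N = g * yv Kp \<mu> N G / 2"
proof -
  have "g * yv Kp \<mu> N G = eps Kp K G * (sgn_ccw Kp N G * sgn_ccw Kp N G) * diameter G * \<mu> G N"
    unfolding yv_def e[symmetric] by (simp add: algebra_simps)
  then show ?thesis by (simp add: sgn_sq)
qed

lemma loc_eq:
  assumes conf: "conforming T" and Kp: "\<forall>F \<in> interior_edges T. Kp F \<in> T \<and> F \<subseteq> Kp F"
    and KT: "{N, A, B} \<in> T" and nc: "\<not> collinear {N, A, B}"
    and eq: "(\<Sum>F\<in>{F \<in> interior_edges T. F \<subseteq> {N, A, B} \<and> N \<in> F}. diameter F / 2 * eps Kp {N, A, B} F * \<mu> F N) = 0"
    and IA: "{N, A} \<in> interior_edges T"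
  shows "({N, B} \<in> interior_edges T \<longrightarrow> yv Kp \<mu> N {N, A} = yv Kp \<mu> N {N, B}) \<and>
         ({N, B} \<notin> interior_edges T \<longrightarrow> yv Kp \<mu> N {N, A} = 0)"
proof -
  define K where "K = {N, A, B}"
  have d: "N \<noteq> A" "N \<noteq> B" "A \<noteq> B" using noncol_distinct[OF nc] by auto
  define g where "g = (if cr (A - N) (B - N) < 0 then 1 else -1 :: real)"
  have c0: "cr (A - N) (B - N) \<noteq> 0" using cr_ne0_any[OF nc] by auto
  have crsym: "cr (B - N) (A - N) = - cr (A - N) (B - N)" by (simp add: cr_def)
  have g0: "g \<noteq> 0" by (simp add: g_def)
  have eA: "eps Kp K {N, A} * sgn_ccw Kp N {N, A} = g"
    unfolding K_def g_def by (rule eps_sgn[OF conf Kp KT nc IA])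
  have tA: "diameter {N, A} / 2 * eps Kp K {N, A} * \<mu> {N, A} N = g * yv Kp \<mu> N {N, A} / 2"
    by (rule term_eq[OF eA])
  have S: "{F \<in> interior_edges T. F \<subseteq> K \<and> N \<in> F} = {G \<in> {{N, A}, {N, B}}. G \<in> interior_edges T}"
  proof
    show "{F \<in> interior_edges T. F \<subseteq> K \<and> N \<in> F} \<subseteq> {G \<in> {{N, A}, {N, B}}. G \<in> interior_edges T}"
    proof
      fix F assume F: "F \<in> {F \<in> interior_edges T. F \<subseteq> K \<and> N \<in> F}"
      then have "card F = 2" unfolding interior_edges_def by blast
      then have "F = {N, A} \<or> F = {N, B}" using edges_at[of F N A B] F by (auto simp: K_def)
      then show "F \<in> {G \<in> {{N, A}, {N, B}}. G \<in> interior_edges T}" using F by auto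
    qed
  next
    show "{G \<in> {{N, A}, {N, B}}. G \<in> interior_edges T} \<subseteq> {F \<in> interior_edges T. F \<subseteq> K \<and> N \<in> F}"
      by (auto simp: K_def)
  qed
  have eq': "(\<Sum>F\<in>{G \<in> {{N, A}, {N, B}}. G \<in> interior_edges T}. diameter F / 2 * eps Kp K F * \<mu> F N) = 0"
    using eq S by (simp add: K_def)
  have NAB: "{N, A} \<noteq> {N, B}" using d by (auto simp: doubleton_eq_iff)
  show ?thesis
  proof (intro conjI impI)
    assume IB: "{N, B} \<in> interior_edges T"
    have KB: "{N, B, A} \<in> T" "\<not> collinear {N, B, A}" using KT nc by (simp_all add: insert_commute)
    have "eps Kp {N, B, A} {N, B} * sgn_ccw Kp N {N, B} = (if cr (B - N) (A - N) < 0 then 1 else -1)"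
      by (rule eps_sgn[OF conf Kp KB IB])
    then have eB: "eps Kp K {N, B} * sgn_ccw Kp N {N, B} = - g"
      using c0 crsym by (auto simp: K_def g_def insert_commute)
    have tB: "diameter {N, B} / 2 * eps Kp K {N, B} * \<mu> {N, B} N = (- g) * yv Kp \<mu> N {N, B} / 2"
      by (rule term_eq[OF eB])
    have set: "{G \<in> {{N, A}, {N, B}}. G \<in> interior_edges T} = {{N, A}, {N, B}}" using IA IB by auto
    have "(\<Sum>F\<in>{{N, A}, {N, B}}. diameter F / 2 * eps Kp K F * \<mu> F N) =
       g * yv Kp \<mu> N {N, A} / 2 + (- g) * yv Kp \<mu> N {N, B} / 2"
      using NAB tA tB by simp
    then have "g * yv Kp \<mu> N {N, A} / 2 + (- g) * yv Kp \<mu> N {N, B} / 2 = 0"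
      using eq' unfolding set by simp
    then have "g * (yv Kp \<mu> N {N, A} - yv Kp \<mu> N {N, B}) = 0" by (simp add: algebra_simps)
    then show "yv Kp \<mu> N {N, A} = yv Kp \<mu> N {N, B}" using g0 by simp
  next
    assume IB: "{N, B} \<notin> interior_edges T"
    have set: "{G \<in> {{N, A}, {N, B}}. G \<in> interior_edges T} = {{N, A}}" using IA IB by auto
    have "(\<Sum>F\<in>{{N, A}}. diameter F / 2 * eps Kp K F * \<mu> F N) = g * yv Kp \<mu> N {N, A} / 2"
      using tA by simp
    then have "g * yv Kp \<mu> N {N, A} / 2 = 0" using eq' unfolding set by simp
    then show "yv Kp \<mu> N {N, A} = 0" using g0 by simp
  qed
qed

lemma open_pos: "affine_fun \<phi> \<Longrightarrow> open {x. \<phi> x > 0}"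
proof -
  assume "affine_fun \<phi>"
  then obtain a c where e: "\<And>x. \<phi> x = a \<bullet> x + c" unfolding affine_fun_iff by blast
  have "{x. \<phi> x > 0} = {x. a \<bullet> x > - c}" using e by auto
  then show ?thesis using open_halfspace_gt by simp
qed

lemma near_point:
  assumes "triangle K" "N \<in> K" "r > 0"
  shows "\<exists>p \<in> convex hull K. p \<in> ball N r \<and> p \<noteq> N"
proof -
  obtain A B where K: "K = {N, A, B}" and nc: "\<not> collinear {N, A, B}" using tri3[OF assms(1,2)] by blast
  have d: "A \<noteq> N" using noncol_distinct[OF nc] by auto
  have nA: "norm (A - N) > 0" using d by simp
  define s where "s = min (1/2) (r / (2 * norm (A - N)))"
  have s0: "s > 0" using nA assms(3) by (simp add: s_def)
  have s1: "s \<le> 1/2" by (simp add: s_def)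
  have s2: "s * norm (A - N) \<le> r / 2"
  proof -
    have "s \<le> r / (2 * norm (A - N))" by (simp add: s_def)
    then have "s * norm (A - N) \<le> r / (2 * norm (A - N)) * norm (A - N)"
      by (rule mult_right_mono) (use nA in auto)
    also have "\<dots> = r / 2" using nA by simp
    finally show ?thesis .
  qed
  define p where "p = (1 - s) *\<^sub>R N + s *\<^sub>R A + 0 *\<^sub>R B"
  have pK: "p \<in> convex hull K" unfolding K convex_hull_3 p_def using s0 s1
    by (intro CollectI exI[of _ "1 - s"] exI[of _ s] exI[of _ 0]) auto
  have pN: "p - N = s *\<^sub>R (A - N)" by (simp add: p_def algebra_simps)
  have "dist N p = norm (p - N)" by (simp add: dist_norm norm_minus_commute)
  also have "\<dots> = s * norm (A - N)" using pN s0 by simp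
  finally have "dist N p = s * norm (A - N)" .
  then have "p \<in> ball N r" using s2 assms(3) by simp
  moreover have "p \<noteq> N" using pN s0 d by auto
  ultimately show ?thesis using pK by blast
qed

lemma hat_pos_ball:
  assumes "finite C" "\<forall>K\<in>C. triangle K \<and> N \<in> K"
  shows "\<exists>r>0. \<forall>K\<in>C. \<forall>x\<in>ball N r. hat K N x > 0"
proof -
  define Op where "Op = (\<Inter>K\<in>C. {x. hat K N x > 0})"
  have "open Op" unfolding Op_def
    using assms by (intro open_INT) (auto intro!: open_pos hat_props(1))
  moreover have "N \<in> Op" unfolding Op_def using assms hat_props(2) by auto
  ultimately obtain r where "r > 0" "ball N r \<subseteq> Op" using open_contains_ball by blast
  then show ?thesis unfolding Op_def by blast
qed

lemma interior_tri:
  assumes nc: "\<not> collinear {N, A, B}" and K: "K = {N, A, B}"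
    and h: "hat K N x > 0" "hat K A x > 0" "hat K B x > 0"
  shows "x \<in> interior (convex hull K)"
proof -
  have t: "triangle K" using tri_of[OF nc] K by simp
  define W where "W = {z. hat K N z > 0} \<inter> {z. hat K A z > 0} \<inter> {z. hat K B z > 0}"
  have "open W" unfolding W_def using K
    by (intro open_Int open_pos hat_props(1)[OF t]) auto
  moreover have "x \<in> W" using h by (simp add: W_def)
  moreover have "W \<subseteq> convex hull K"
  proof
    fix z assume "z \<in> W"
    then have "0 \<le> hat K N z \<and> 0 \<le> hat K A z \<and> 0 \<le> hat K B z" by (simp add: W_def less_imp_le)
    then show "z \<in> convex hull K" using conv_char[OF nc K] by blast
  qed
  ultimately show ?thesis by (rule interiorI)
qed

lemma edge_nbhd:
  assumes conf: "conforming T" and KT: "{N, B, A} \<in> T" "{N, B, E} \<in> T" and ne: "{N, B, A} \<noteq> {N, B, E}"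
    and nc: "\<not> collinear {N, B, A}" and nc': "\<not> collinear {N, B, E}"
    and h: "hat {N, B, A} A x = 0" "hat {N, B, A} N x > 0" "hat {N, B, A} B x > 0"
  shows "x \<in> interior (convex hull {N, B, A} \<union> convex hull {N, B, E})"
proof -
  define K where "K = {N, B, A}" define K' where "K' = {N, B, E}"
  have t: "triangle K" "triangle K'" using tri_of nc nc' by (auto simp: K_def K'_def)
  have d: "N \<noteq> B" "N \<noteq> A" "B \<noteq> A" "N \<noteq> E" "B \<noteq> E" using noncol_distinct[OF nc] noncol_distinct[OF nc'] by auto
  define W where "W = {z. hat K N z > 0} \<inter> {z. hat K B z > 0} \<inter> {z. hat K' N z > 0} \<inter> {z. hat K' B z > 0}"
  have "open W" unfolding W_def
    by (intro open_Int open_pos hat_props(1)[OF t(1)] hat_props(1)[OF t(2)]) (auto simp: K_def K'_def)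
  moreover have "x \<in> W"
  proof -
    have xd: "x = hat K N x *\<^sub>R N + hat K B x *\<^sub>R B + hat K A x *\<^sub>R A"
      using hat_decomp[OF nc K_def] .
    have xs: "hat K N x + hat K B x + hat K A x = 1" using hat_sum[OF nc K_def] .
    have x2: "x = hat K N x *\<^sub>R N + hat K B x *\<^sub>R B + 0 *\<^sub>R E" using xd h(1) by (simp add: K_def)
    have s2: "hat K N x + hat K B x + 0 = 1" using xs h(1) by (simp add: K_def)
    have "hat K' N x = hat K N x" using hat_at_comb[OF nc' K'_def s2] x2 by simp
    moreover have ncB: "\<not> collinear {B, E, N}" using nc' by (simp add: insert_commute)
    have KB: "K' = {B, E, N}" by (auto simp: K'_def)
    have s3: "hat K B x + 0 + hat K N x = 1" using s2 by simp
    have "hat K' B x = hat K B x" using hat_at_comb[OF ncB KB s3] x2 by (simp add: algebra_simps)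
    ultimately show ?thesis using h by (simp add: W_def K_def)
  qed
  moreover have "W \<subseteq> convex hull K \<union> convex hull K'"
  proof
    fix z assume z: "z \<in> W"
    show "z \<in> convex hull K \<union> convex hull K'"
    proof (cases "hat K A z \<ge> 0")
      case True
      moreover have "0 \<le> hat K N z \<and> 0 \<le> hat K B z" using z by (simp add: W_def less_imp_le)
      ultimately have "z \<in> convex hull K" using conv_char[OF nc K_def] by blast
      then show ?thesis by simp
    next
      case False
      have opp: "hat K' E A < 0" unfolding K'_def by (rule opposite[OF conf KT ne nc nc'])
      have "hat K' E z = hat K' E A * hat K A z" unfolding K_def K'_def by (rule hat_rel[OF nc nc'])
      then have "hat K' E z > 0" using opp False by (simp add: mult_neg_neg)
      moreover have "0 \<le> hat K' N z \<and> 0 \<le> hat K' B z" using z by (simp add: W_def less_imp_le)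
      ultimately have "z \<in> convex hull K'" using conv_char[OF nc' K'_def] by force
      then show ?thesis by simp
    qed
  qed
  ultimately show ?thesis unfolding K_def K'_def by (rule interiorI)
qed

lemma finite_tri: "triangle K \<Longrightarrow> finite K"
  unfolding triangle_def by (auto intro: card_ge_0_finite)

lemma closed_hull_tri: "triangle K \<Longrightarrow> closed (convex hull K)"
  by (intro compact_imp_closed compact_convex_hull finite_imp_compact finite_tri)

lemma disj_lemma:
  assumes conf: "conforming T" and KT: "K \<in> T" "K' \<in> T" "K \<noteq> K'" and NK: "N \<in> K"
    and x: "x \<in> convex hull K" "x \<in> convex hull K'" and hp: "hat K N x > 0" and xN: "x \<noteq> N"
  shows "\<exists>G. G \<in> interior_edges T \<and> N \<in> G \<and> G \<subseteq> K \<and> G \<subseteq> K'"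
proof -
  have t: "triangle K" "triangle K'" using conf_tri[OF conf] KT by auto
  obtain A B where K: "K = {N, A, B}" and nc: "\<not> collinear {N, A, B}" using tri3[OF t(1) NK] by blast
  have d: "N \<noteq> A" "N \<noteq> B" "A \<noteq> B" using noncol_distinct[OF nc] by auto
  have xi: "x \<in> convex hull (K \<inter> K')" using conf_int[OF conf KT] x by blast
  show ?thesis
  proof (cases "N \<in> K'")
    case False
    then have "K \<inter> K' \<subseteq> {A, B}" using K by auto
    then have "x \<in> convex hull {A, B}" using xi hull_mono by blast
    then obtain u v where xuv: "x = u *\<^sub>R A + v *\<^sub>R B" "u + v = 1" unfolding convex_hull_2 by blast
    have "hat K N x = u * hat K N A + v * hat K N B + 0 * hat K N N"
      using affine_comb[OF hat_props(1)[OF t(1) NK], of u v 0 A B N] xuv by simp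
    also have "\<dots> = 0" using hat_props(3)[OF t(1) NK] K d by auto
    finally show ?thesis using hp by simp
  next
    case NK': True
    show ?thesis
    proof (cases "A \<in> K'")
      case A: True
      show ?thesis
      proof (cases "B \<in> K'")
        case True
        then have "K \<subseteq> K'" using A NK' K by auto
        moreover have "card K = card K'" using t unfolding triangle_def by simp
        ultimately have "K = K'" using card_subset_eq[OF finite_tri[OF t(2)]] by blast
        then show ?thesis using KT by simp
      next
        case False
        have c2: "card {N, A} = 2" using d by simp
        have s1: "{N, A} \<subseteq> K" "{N, A} \<subseteq> K'" using K A NK' by auto
        have "{N, A} \<in> interior_edges T" unfolding interior_edges_def
          using KT c2 s1 by blast
        then show ?thesis using A NK' K by auto
      qed
    next
      case nA: False
      show ?thesis
      proof (cases "B \<in> K'")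
        case True
        have c2: "card {N, B} = 2" using d by simp
        have s1: "{N, B} \<subseteq> K" "{N, B} \<subseteq> K'" using K True NK' by auto
        have "{N, B} \<in> interior_edges T" unfolding interior_edges_def
          using KT c2 s1 by blast
        then show ?thesis using True NK' K by auto
      next
        case False
        then have "K \<inter> K' = {N}" using nA NK' K by auto
        then have "x = N" using xi by simp
        then show ?thesis using xN by simp
      qed
    qed
  qed
qed

lemma all_in_C:
  assumes conf: "conforming T" and intN: "N \<in> interior (mesh_dom T)"
    and C: "C \<subseteq> T" "\<forall>K\<in>C. N \<in> K" "C \<noteq> {}"
    and clos: "\<forall>K\<in>C. \<forall>K'\<in>T. \<forall>G. G \<in> interior_edges T \<and> N \<in> G \<and> G \<subseteq> K \<and> G \<subseteq> K' \<longrightarrow> K' \<in> C"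
    and K'': "K'' \<in> T" "N \<in> K''"
  shows "K'' \<in> C"
proof (rule ccontr)
  assume nC: "K'' \<notin> C"
  have fT: "finite T" using conf unfolding conforming_def by blast
  have tT: "\<And>K. K \<in> T \<Longrightarrow> triangle K" using conf_tri[OF conf] .
  have fTN: "finite {K \<in> T. N \<in> K}" using fT by simp
  have tTN: "\<forall>K\<in>{K \<in> T. N \<in> K}. triangle K \<and> N \<in> K" using tT by blast
  obtain r1 where r1: "r1 > 0" "\<forall>K\<in>{K \<in> T. N \<in> K}. \<forall>x\<in>ball N r1. hat K N x > 0"
    using hat_pos_ball[OF fTN tTN] by blast
  obtain r2 where r2: "r2 > 0" "ball N r2 \<subseteq> mesh_dom T" using intN mem_interior by blast
  define r where "r = min r1 r2"
  have r0: "r > 0" using r1 r2 by (simp add: r_def)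
  define S where "S = ball N r - {N}"
  have conn: "connected S" unfolding S_def by (rule connected_punctured_ball) simp
  define A1 where "A1 = \<Union>((\<lambda>K. convex hull K) ` C)"
  define A2 where "A2 = \<Union>((\<lambda>K. convex hull K) ` (T - C))"
  have fC: "finite C" using C(1) fT finite_subset by blast
  have cl1: "closed A1" unfolding A1_def using C fC tT
    by (intro closed_Union) (auto intro: closed_hull_tri)
  have cl2: "closed A2" unfolding A2_def using fT tT
    by (intro closed_Union) (auto intro: closed_hull_tri)
  have cov: "S \<subseteq> A1 \<union> A2"
  proof
    fix x assume "x \<in> S"
    then have "x \<in> mesh_dom T" using r2 by (auto simp: S_def r_def)
    then obtain K where "K \<in> T" "x \<in> convex hull K" unfolding mesh_dom_def by blast
    then show "x \<in> A1 \<union> A2" unfolding A1_def A2_def by blast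
  qed
  have dj: "A1 \<inter> A2 \<inter> S = {}"
  proof (rule ccontr)
    assume "A1 \<inter> A2 \<inter> S \<noteq> {}"
    then obtain x K K' where x: "x \<in> S" and K: "K \<in> C" "x \<in> convex hull K" and K': "K' \<in> T" "K' \<notin> C" "x \<in> convex hull K'"
      unfolding A1_def A2_def by blast
    have KT: "K \<in> T" using K C by auto
    have NK: "N \<in> K" using K C by auto
    have hp: "hat K N x > 0" using r1 KT NK x by (auto simp: S_def r_def)
    have "K \<noteq> K'" using K K' by auto
    then obtain G where "G \<in> interior_edges T \<and> N \<in> G \<and> G \<subseteq> K \<and> G \<subseteq> K'"
      using disj_lemma[OF conf KT K'(1) _ NK K(2) K'(3) hp] x by (auto simp: S_def)
    then have "K' \<in> C" using clos K K' by blast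
    then show False using K' by simp
  qed
  obtain K0 where K0: "K0 \<in> C" using C by blast
  obtain p where p: "p \<in> convex hull K0" "p \<in> ball N r" "p \<noteq> N"
    using near_point[OF tT[of K0] _ r0] K0 C by blast
  have ne1: "A1 \<inter> S \<noteq> {}" using p K0 unfolding A1_def S_def by blast
  obtain q where q: "q \<in> convex hull K''" "q \<in> ball N r" "q \<noteq> N"
    using near_point[OF tT[OF K''(1)] K''(2) r0] by blast
  have ne2: "A2 \<inter> S \<noteq> {}" using q K'' nC unfolding A2_def S_def by blast
  show False using conn cl1 cl2 cov dj ne1 ne2 unfolding connected_closed by blast
qed

lemma edge_case:
  assumes conf: "conforming T" and C: "C \<subseteq> T"
    and full: "\<forall>K\<in>C. \<forall>A\<in>K. A \<noteq> N \<longrightarrow> {N, A} \<in> interior_edges T"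
    and clos: "\<forall>K\<in>C. \<forall>K'\<in>T. \<forall>G. G \<in> interior_edges T \<and> N \<in> G \<and> G \<subseteq> K \<and> G \<subseteq> K' \<longrightarrow> K' \<in> C"
    and KC: "{N, B, A} \<in> C" and nc: "\<not> collinear {N, B, A}"
    and h: "hat {N, B, A} A x = 0" "hat {N, B, A} N x > 0" "hat {N, B, A} B x > 0"
  shows "x \<in> interior (\<Union>((\<lambda>K. convex hull K) ` C))"
proof -
  define K where "K = {N, B, A}"
  have d: "N \<noteq> B" "N \<noteq> A" "B \<noteq> A" using noncol_distinct[OF nc] by auto
  have KT: "K \<in> T" using KC C by (auto simp: K_def)
  have IE: "{N, B} \<in> interior_edges T" using full KC d by (auto simp: K_def)
  obtain K1 K2 where k: "K1 \<in> T" "K2 \<in> T" "K1 \<noteq> K2" "{N, B} \<subseteq> K1" "{N, B} \<subseteq> K2"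
    using IE unfolding interior_edges_def by blast
  obtain K' where K': "K' \<in> T" "K' \<noteq> K" "{N, B} \<subseteq> K'"
  proof (cases "K1 = K")
    case True then show ?thesis using that[of K2] k by simp
  next
    case False then show ?thesis using that[of K1] k by simp
  qed
  have sub: "{N, B} \<subseteq> {N, B, A}" by auto
  have K'C: "K' \<in> C" using clos[rule_format, of "{N, B, A}" K' "{N, B}"] KC K'(1,3) IE sub by blast
  obtain E where E: "K' = {N, B, E}" and nc': "\<not> collinear {N, B, E}"
    using tri_edge[OF conf_tri[OF conf K'(1)], of N B] K' d by auto
  have KT': "{N, B, A} \<in> T" "{N, B, E} \<in> T" using KT K' E by (auto simp: K_def)
  have ne: "{N, B, A} \<noteq> {N, B, E}" using K' E by (simp add: K_def)
  have "x \<in> interior (convex hull {N, B, A} \<union> convex hull {N, B, E})"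
    by (rule edge_nbhd[OF conf KT' ne nc nc' h])
  moreover have "convex hull {N, B, A} \<union> convex hull {N, B, E} \<subseteq> \<Union>((\<lambda>K. convex hull K) ` C)"
    using KC K'C E by auto
  ultimately show ?thesis using interior_mono by blast
qed

lemma cover:
  assumes conf: "conforming T" and C: "C \<subseteq> T" "\<forall>K\<in>C. N \<in> K" "C \<noteq> {}"
    and full: "\<forall>K\<in>C. \<forall>A\<in>K. A \<noteq> N \<longrightarrow> {N, A} \<in> interior_edges T"
    and clos: "\<forall>K\<in>C. \<forall>K'\<in>T. \<forall>G. G \<in> interior_edges T \<and> N \<in> G \<and> G \<subseteq> K \<and> G \<subseteq> K' \<longrightarrow> K' \<in> C"
  shows "N \<in> interior (mesh_dom T)"
proof -
  have fT: "finite T" using conf unfolding conforming_def by blast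
  have tT: "\<And>K. K \<in> T \<Longrightarrow> triangle K" using conf_tri[OF conf] .
  have fC: "finite C" using C(1) fT finite_subset by blast
  have tC: "\<forall>K\<in>C. triangle K \<and> N \<in> K" using C tT by blast
  obtain r where r: "r > 0" "\<forall>K\<in>C. \<forall>x\<in>ball N r. hat K N x > 0"
    using hat_pos_ball[OF fC tC] by blast
  define S where "S = ball N r - {N}"
  have conn: "connected S" unfolding S_def by (rule connected_punctured_ball) simp
  define A1 where "A1 = \<Union>((\<lambda>K. convex hull K) ` C)"
  have cl1: "closed A1" unfolding A1_def using fC tC
    by (intro closed_Union) (auto intro: closed_hull_tri)
  have loc: "x \<in> interior A1" if xA: "x \<in> A1" and xS: "x \<in> S" for x
  proof -
    obtain K where KC: "K \<in> C" and xK: "x \<in> convex hull K" using xA unfolding A1_def by blast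
    have t: "triangle K" "N \<in> K" using tC KC by auto
    obtain A B where K: "K = {N, A, B}" and nc: "\<not> collinear {N, A, B}" using tri3[OF t] by blast
    have d: "N \<noteq> A" "N \<noteq> B" "A \<noteq> B" using noncol_distinct[OF nc] by auto
    have hN: "hat K N x > 0" using r KC xS by (auto simp: S_def)
    have hAB: "hat K A x \<ge> 0" "hat K B x \<ge> 0" using conv_char[OF nc K] xK by auto
    have sum: "hat K N x + hat K A x + hat K B x = 1" by (rule hat_sum[OF nc K])
    have dec: "x = hat K N x *\<^sub>R N + hat K A x *\<^sub>R A + hat K B x *\<^sub>R B" by (rule hat_decomp[OF nc K])
    have xN: "x \<noteq> N" using xS by (simp add: S_def)
    show ?thesis
    proof (cases "hat K A x > 0 \<and> hat K B x > 0")
      case True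
      have "x \<in> interior (convex hull K)" using interior_tri[OF nc K hN] True by blast
      moreover have "convex hull K \<subseteq> A1" using KC unfolding A1_def by blast
      ultimately show ?thesis using interior_mono by blast
    next
      case False
      then have "hat K A x = 0 \<or> hat K B x = 0" using hAB by auto
      then show ?thesis
      proof
        assume hA: "hat K A x = 0"
        have "hat K B x > 0"
        proof (rule ccontr)
          assume "\<not> hat K B x > 0"
          then have "hat K B x = 0" using hAB by simp
          then have "x = N" using dec sum hA by simp
          then show False using xN by simp
        qed
        have K2: "K = {N, B, A}" using K by auto
        have nc2: "\<not> collinear {N, B, A}" using nc by (simp add: insert_commute)
        have KC2: "{N, B, A} \<in> C" using KC K2 by simp
        show ?thesis unfolding A1_def
          by (rule edge_case[OF conf C(1) full clos KC2 nc2]) (use hA hN \<open>hat K B x > 0\<close> K2 in simp_all)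
      next
        assume hB: "hat K B x = 0"
        have "hat K A x > 0"
        proof (rule ccontr)
          assume "\<not> hat K A x > 0"
          then have "hat K A x = 0" using hAB by simp
          then have "x = N" using dec sum hB by simp
          then show False using xN by simp
        qed
        have KC2: "{N, A, B} \<in> C" using KC K by simp
        show ?thesis unfolding A1_def
          by (rule edge_case[OF conf C(1) full clos KC2 nc]) (use hB hN \<open>hat K A x > 0\<close> K in simp_all)
      qed
    qed
  qed
  obtain K0 where K0: "K0 \<in> C" using C by blast
  obtain p where p: "p \<in> convex hull K0" "p \<in> ball N r" "p \<noteq> N"
    using near_point[OF _ _ r(1), of K0] K0 tC by blast
  have pA: "p \<in> A1" using p K0 unfolding A1_def by blast
  have pS: "p \<in> S" using p by (simp add: S_def)
  have "interior A1 \<inter> S = {} \<or> (- A1) \<inter> S = {}"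
  proof (rule connectedD[OF conn])
    show "open (interior A1)" by simp
    show "open (- A1)" using cl1 by (simp add: open_Compl)
    show "interior A1 \<inter> - A1 \<inter> S = {}" using interior_subset by blast
    show "S \<subseteq> interior A1 \<union> - A1" using loc by blast
  qed
  moreover have "interior A1 \<inter> S \<noteq> {}" using loc[OF pA pS] pS by blast
  ultimately have SA: "S \<subseteq> A1" by blast
  have NA: "N \<in> A1" using K0 tC unfolding A1_def by (blast intro: hull_inc)
  have "ball N r \<subseteq> A1" using SA NA by (auto simp: S_def)
  moreover have "A1 \<subseteq> mesh_dom T" using C unfolding A1_def mesh_dom_def by blast
  ultimately show ?thesis using r(1) mem_interior by blast
qed

definition bfs :: "vset set \<Rightarrow> (vset \<Rightarrow> vset) \<Rightarrow> (vset \<Rightarrow> pt \<Rightarrow> real) \<Rightarrow> vset \<Rightarrow> pt \<Rightarrow> real" where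
  "bfs T Kp \<mu> K M = (\<Sum>F\<in>{F \<in> interior_edges T. F \<subseteq> K \<and> M \<in> F}. diameter F / 2 * eps Kp K F * \<mu> F M)"

lemma card_IE: "G \<in> interior_edges T \<Longrightarrow> card G = 2"
  unfolding interior_edges_def by blast

lemma loc_pair:
  assumes conf: "conforming T" and Kp: "\<forall>F \<in> interior_edges T. Kp F \<in> T \<and> F \<subseteq> Kp F"
    and KT: "K \<in> T" and NK: "N \<in> K" and eq: "bfs T Kp \<mu> K N = 0"
    and G: "G \<in> interior_edges T" "N \<in> G" "G \<subseteq> K"
    and G': "G' \<in> interior_edges T" "N \<in> G'" "G' \<subseteq> K"
  shows "yv Kp \<mu> N G = yv Kp \<mu> N G'"
proof -
  obtain A B where K: "K = {N, A, B}" and nc: "\<not> collinear {N, A, B}"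
    using tri3[OF conf_tri[OF conf KT] NK] by blast
  have K2: "K = {N, B, A}" using K by auto
  have nc2: "\<not> collinear {N, B, A}" using nc by (simp add: insert_commute)
  have e1: "(\<Sum>F\<in>{F \<in> interior_edges T. F \<subseteq> {N, A, B} \<and> N \<in> F}. diameter F / 2 * eps Kp {N, A, B} F * \<mu> F N) = 0"
    using eq unfolding bfs_def K .
  have e2: "(\<Sum>F\<in>{F \<in> interior_edges T. F \<subseteq> {N, B, A} \<and> N \<in> F}. diameter F / 2 * eps Kp {N, B, A} F * \<mu> F N) = 0"
    using eq unfolding bfs_def K2 .
  have KT1: "{N, A, B} \<in> T" and KT2: "{N, B, A} \<in> T" using KT K K2 by auto
  have g: "G = {N, A} \<or> G = {N, B}" using edges_at[OF card_IE[OF G(1)]] G K by auto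
  have g': "G' = {N, A} \<or> G' = {N, B}" using edges_at[OF card_IE[OF G'(1)]] G' K by auto
  show ?thesis
  proof (cases "G = G'")
    case True then show ?thesis by simp
  next
    case False
    then have "(G = {N, A} \<and> G' = {N, B}) \<or> (G = {N, B} \<and> G' = {N, A})" using g g' by auto
    then show ?thesis
    proof
      assume h: "G = {N, A} \<and> G' = {N, B}"
      show ?thesis using loc_eq[where T=T and Kp=Kp and N=N and A=A and B=B and \<mu>=\<mu>, OF conf Kp KT1 nc e1] G(1) G'(1) h by auto
    next
      assume h: "G = {N, B} \<and> G' = {N, A}"
      show ?thesis using loc_eq[where T=T and Kp=Kp and N=N and A=B and B=A and \<mu>=\<mu>, OF conf Kp KT2 nc2 e2] G(1) G'(1) h by auto
    qed
  qed
qed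

lemma loc_zero:
  assumes conf: "conforming T" and Kp: "\<forall>F \<in> interior_edges T. Kp F \<in> T \<and> F \<subseteq> Kp F"
    and KT: "K \<in> T" and NK: "N \<in> K" and eq: "bfs T Kp \<mu> K N = 0"
    and G: "G \<in> interior_edges T" "N \<in> G" "G \<subseteq> K"
    and A': "A' \<in> K" "A' \<noteq> N" "{N, A'} \<notin> interior_edges T"
  shows "yv Kp \<mu> N G = 0"
proof -
  obtain A B where K: "K = {N, A, B}" and nc: "\<not> collinear {N, A, B}"
    using tri3[OF conf_tri[OF conf KT] NK] by blast
  have K2: "K = {N, B, A}" using K by auto
  have nc2: "\<not> collinear {N, B, A}" using nc by (simp add: insert_commute)
  have e1: "(\<Sum>F\<in>{F \<in> interior_edges T. F \<subseteq> {N, A, B} \<and> N \<in> F}. diameter F / 2 * eps Kp {N, A, B} F * \<mu> F N) = 0"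
    using eq unfolding bfs_def K .
  have e2: "(\<Sum>F\<in>{F \<in> interior_edges T. F \<subseteq> {N, B, A} \<and> N \<in> F}. diameter F / 2 * eps Kp {N, B, A} F * \<mu> F N) = 0"
    using eq unfolding bfs_def K2 .
  have KT1: "{N, A, B} \<in> T" and KT2: "{N, B, A} \<in> T" using KT K K2 by auto
  have g: "G = {N, A} \<or> G = {N, B}" using edges_at[OF card_IE[OF G(1)]] G K by auto
  have a: "A' = A \<or> A' = B" using A' K by auto
  show ?thesis
  proof (cases "G = {N, A}")
    case True
    then have "A' = B" using a A'(3) G(1) by auto
    then show ?thesis using loc_eq[where T=T and Kp=Kp and N=N and A=A and B=B and \<mu>=\<mu>, OF conf Kp KT1 nc e1] G(1) A'(3) True by auto
  next
    case False
    then have GB: "G = {N, B}" using g by simp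
    then have "A' = A" using a A'(3) G(1) by auto
    then show ?thesis using loc_eq[where T=T and Kp=Kp and N=N and A=B and B=A and \<mu>=\<mu>, OF conf Kp KT2 nc2 e2] G(1) A'(3) GB by auto
  qed
qed

lemma diam_pos: "G \<in> interior_edges T \<Longrightarrow> diameter G > 0"
proof -
  assume "G \<in> interior_edges T"
  then obtain P Q where G: "G = {P, Q}" "P \<noteq> Q" using card_IE unfolding card_2_iff by blast
  have "bounded G" using G by simp
  moreover have "P \<in> G" "Q \<in> G" using G by auto
  ultimately have "dist P Q \<le> diameter G" by (rule diameter_bounded_bound)
  moreover have "dist P Q > 0" using G by simp
  ultimately show ?thesis by linarith
qed

lemma uniq:
  assumes conf: "conforming T" and Kp: "\<forall>F \<in> interior_edges T. Kp F \<in> T \<and> F \<subseteq> Kp F"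
    and mu: "\<mu> \<in> Mh T Kp" and eqs: "\<forall>K\<in>T. \<forall>M\<in>K. bfs T Kp \<mu> K M = 0"
  shows "\<mu> F N = 0"
proof (cases "F \<in> interior_edges T \<and> N \<in> F")
  case False
  then show ?thesis using mu unfolding Mh_def by blast
next
  case True
  then have F: "F \<in> interior_edges T" "N \<in> F" by auto
  have kpF: "Kp F \<in> T" "F \<subseteq> Kp F" using Kp F by auto
  have yF: "yv Kp \<mu> N F = 0"
  proof (rule ccontr)
    define c where "c = yv Kp \<mu> N F"
    assume "yv Kp \<mu> N F \<noteq> 0"
    then have c0: "c \<noteq> 0" by (simp add: c_def)
    define C where "C = {K \<in> T. N \<in> K \<and> (\<exists>G. G \<in> interior_edges T \<and> N \<in> G \<and> G \<subseteq> K \<and> yv Kp \<mu> N G = c)}"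
    have P1: "yv Kp \<mu> N G = c" if K: "K \<in> C" and G: "G \<in> interior_edges T" "N \<in> G" "G \<subseteq> K" for K G
    proof -
      obtain G0 where G0: "G0 \<in> interior_edges T" "N \<in> G0" "G0 \<subseteq> K" "yv Kp \<mu> N G0 = c"
        and KT: "K \<in> T" and NK: "N \<in> K" using K unfolding C_def by blast
      have "yv Kp \<mu> N G = yv Kp \<mu> N G0"
        by (rule loc_pair[OF conf Kp KT NK _ G G0(1-3)]) (use eqs KT NK in blast)
      then show ?thesis using G0 by simp
    qed
    have full: "\<forall>K\<in>C. \<forall>A\<in>K. A \<noteq> N \<longrightarrow> {N, A} \<in> interior_edges T"
    proof (intro ballI impI)
      fix K A assume K: "K \<in> C" and A: "A \<in> K" "A \<noteq> N"
      show "{N, A} \<in> interior_edges T"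
      proof (rule ccontr)
        assume nA: "{N, A} \<notin> interior_edges T"
        obtain G0 where G0: "G0 \<in> interior_edges T" "N \<in> G0" "G0 \<subseteq> K" "yv Kp \<mu> N G0 = c"
          and KT: "K \<in> T" and NK: "N \<in> K" using K unfolding C_def by blast
        have "yv Kp \<mu> N G0 = 0"
          by (rule loc_zero[OF conf Kp KT NK _ G0(1-3) A nA]) (use eqs KT NK in blast)
        then show False using G0 c0 by simp
      qed
    qed
    have clos: "\<forall>K\<in>C. \<forall>K'\<in>T. \<forall>G. G \<in> interior_edges T \<and> N \<in> G \<and> G \<subseteq> K \<and> G \<subseteq> K' \<longrightarrow> K' \<in> C"
    proof (intro ballI allI impI)
      fix K K' G assume K: "K \<in> C" and K': "K' \<in> T"
        and G: "G \<in> interior_edges T \<and> N \<in> G \<and> G \<subseteq> K \<and> G \<subseteq> K'"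
      have "yv Kp \<mu> N G = c" using P1[OF K] G by blast
      then show "K' \<in> C" unfolding C_def using K' G by blast
    qed
    have CT: "C \<subseteq> T" "\<forall>K\<in>C. N \<in> K" unfolding C_def by auto
    have KpC: "Kp F \<in> C" unfolding C_def using kpF F c_def by blast
    then have Cne: "C \<noteq> {}" by blast
    have NmD: "N \<in> mesh_dom T" unfolding mesh_dom_def using kpF F by (blast intro: hull_inc)
    have Nn: "N \<in> nodes T" unfolding nodes_def using kpF F by blast
    show False
    proof (cases "N \<in> interior_nodes T")
      case True
      then have "N \<notin> frontier (mesh_dom T)" unfolding interior_nodes_def by blast
      then have intN: "N \<in> interior (mesh_dom T)" using NmD closure_subset unfolding frontier_def by blast
      have allc: "yv Kp \<mu> N G = c" if G: "G \<in> {G \<in> interior_edges T. N \<in> G}" for G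
      proof -
        have kg: "Kp G \<in> T" "G \<subseteq> Kp G" using Kp G by auto
        have "Kp G \<in> C" using all_in_C[OF conf intN CT Cne clos kg(1)] kg G by blast
        then show ?thesis using P1 G kg by blast
      qed
      have "(\<Sum>G \<in> {G \<in> interior_edges T. N \<in> G}. sgn_ccw Kp N G * diameter G * \<mu> G N) = 0"
        using mu True unfolding Mh_def by blast
      then have "(\<Sum>G \<in> {G \<in> interior_edges T. N \<in> G}. yv Kp \<mu> N G) = 0" unfolding yv_def .
      moreover have "(\<Sum>G \<in> {G \<in> interior_edges T. N \<in> G}. yv Kp \<mu> N G) = (\<Sum>G \<in> {G \<in> interior_edges T. N \<in> G}. c)"
        using allc by (rule sum.cong[OF refl])
      ultimately have "real (card {G \<in> interior_edges T. N \<in> G}) * c = 0" by simp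
      moreover have "card {G \<in> interior_edges T. N \<in> G} > 0"
        using F finite_IE[OF conf] by (auto simp: card_gt_0_iff)
      ultimately show False using c0 by simp
    next
      case False
      then have "N \<in> frontier (mesh_dom T)" using Nn unfolding interior_nodes_def by blast
      moreover have "N \<in> interior (mesh_dom T)" by (rule cover[OF conf CT Cne full clos])
      ultimately show False unfolding frontier_def by blast
    qed
  qed
  have s: "sgn_ccw Kp N F \<noteq> 0" using sgn_sq[of Kp N F] by auto
  have d: "diameter F \<noteq> 0" using diam_pos[OF F(1)] by simp
  show ?thesis using yF s d unfolding yv_def by simp
qed

lemma bfs_lin:
  assumes "finite S"
  shows "bfs T Kp (\<lambda>F M. a F M - (\<Sum>N\<in>S. b N F M)) K M = bfs T Kp a K M - (\<Sum>N\<in>S. bfs T Kp (b N) K M)"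
proof -
  let ?E = "{F \<in> interior_edges T. F \<subseteq> K \<and> M \<in> F}"
  have "bfs T Kp (\<lambda>F M. a F M - (\<Sum>N\<in>S. b N F M)) K M =
      (\<Sum>F\<in>?E. diameter F / 2 * eps Kp K F * a F M - (\<Sum>N\<in>S. diameter F / 2 * eps Kp K F * b N F M))"
    unfolding bfs_def by (rule sum.cong[OF refl]) (simp add: right_diff_distrib sum_distrib_left)
  also have "\<dots> = bfs T Kp a K M - (\<Sum>F\<in>?E. \<Sum>N\<in>S. diameter F / 2 * eps Kp K F * b N F M)"
    unfolding bfs_def by (rule sum_subtractf)
  also have "(\<Sum>F\<in>?E. \<Sum>N\<in>S. diameter F / 2 * eps Kp K F * b N F M) = (\<Sum>N\<in>S. bfs T Kp (b N) K M)"
    unfolding bfs_def by (rule sum.swap)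
  finally show ?thesis .
qed

lemma hatchi_DG:
  assumes conf: "conforming T" and K: "K \<in> T" and M: "M \<in> K"
  shows "hatchi K M \<in> DG T"
  unfolding DG_def hatchi_def
  using hat_props(1)[OF conf_tri[OF conf K] M] K affine_fun_const[of 0] by auto

theorem mainTheorem4:
  fixes T0 T :: "vset set" and \<Omega> \<Omega>h :: "pt set"
    and \<Gamma> :: "vset \<Rightarrow> pt \<times> pt" and nh :: "vset \<Rightarrow> pt"
    and f gh :: "pt \<Rightarrow> real" and \<beta> \<gamma> :: real
    and Kp :: "vset \<Rightarrow> vset"
    and uh \<theta>h :: "vset \<Rightarrow> pt \<Rightarrow> real"
    and \<theta> :: "pt \<Rightarrow> vset \<Rightarrow> pt \<Rightarrow> real"
  assumes T0: "conforming T0"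
    and \<Omega>: "open \<Omega>" "connected \<Omega>" "bounded \<Omega>" "\<Omega> \<subseteq> \<Omega>h"
    and \<Omega>h: "open \<Omega>h" "connected \<Omega>h" "bounded \<Omega>h" "polygonal \<Omega>h" "\<Omega>h \<subseteq> mesh_dom T0"
    and T: "T = {K \<in> T0. convex hull K \<inter> \<Omega>h \<noteq> {}}"
    and \<Gamma>: "\<forall>K \<in> Tb T \<Omega>h. convex hull K \<inter> frontier \<Omega>h = closed_segment (fst (\<Gamma> K)) (snd (\<Gamma> K))"
    and nh: "\<forall>K \<in> Tb T \<Omega>h. norm (nh K) = 1 \<and> nh K \<bullet> (snd (\<Gamma> K) - fst (\<Gamma> K)) = 0 \<and>
              (\<forall>x \<in> open_segment (fst (\<Gamma> K)) (snd (\<Gamma> K)). \<exists>e>0. \<forall>s. 0 < s \<and> s < e \<longrightarrow>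
                   x - s *\<^sub>R nh K \<in> \<Omega>h \<and> x + s *\<^sub>R nh K \<notin> \<Omega>h)"
    and f: "f measurable_on \<Omega>h" "(\<lambda>x. (f x)\<^sup>2) integrable_on \<Omega>h"
    and \<beta>\<gamma>: "\<beta> > 0" "\<gamma> > 0"
    and coercive: "\<forall>v \<in> CG T. v \<noteq> (\<lambda>_ _. 0) \<longrightarrow> a_h T Kp \<Omega>h \<Gamma> nh \<beta> \<gamma> v v > 0"
    and Kp: "\<forall>F \<in> interior_edges T. Kp F \<in> T \<and> F \<subseteq> Kp F"
    and mixed1: "uh \<in> DG T" "\<theta>h \<in> Mh T Kp"
    and mixed2: "\<forall>w \<in> DG T. at_h T Kp \<Omega>h \<Gamma> nh \<beta> \<gamma> uh w + bform T Kp \<theta>h w = l_h T \<Omega>h \<Gamma> nh \<beta> f gh w"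
    and mixed3: "\<forall>\<mu> \<in> Mh T Kp. bform T Kp \<mu> uh = 0"
    and thetaN: "\<forall>N \<in> nodes T.
        (if {F \<in> interior_edges T. N \<in> F} \<noteq> {} then
           \<theta> N \<in> Mh T Kp
           \<and> (\<forall>F \<in> interior_edges T. N \<notin> F \<longrightarrow> (\<forall>M. \<theta> N F M = 0))
           \<and> (\<forall>K \<in> T. N \<in> K \<longrightarrow>
                 bform T Kp (\<theta> N) (hatchi K N)
                   = l_h T \<Omega>h \<Gamma> nh \<beta> f gh (hatchi K N) - at_h T Kp \<Omega>h \<Gamma> nh \<beta> \<gamma> uh (hatchi K N)
               \<and> (\<forall>M \<in> K. M \<noteq> N \<longrightarrow> bform T Kp (\<theta> N) (hatchi K M) = 0))
         else \<theta> N = (\<lambda>_ _. 0))"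
  shows "\<forall>F M. \<theta>h F M = (\<Sum>N \<in> nodes T. \<theta> N F M)"
proof -
  have TT0: "T \<subseteq> T0" using T by auto
  have conf: "conforming T" by (rule conf_sub[OF T0 TT0])
  have fT: "finite T" using conf unfolding conforming_def by blast
  have fN: "finite (nodes T)" unfolding nodes_def
    using fT conf_tri[OF conf] finite_tri by blast
  define D where "D = (\<lambda>F M. \<theta>h F M - (\<Sum>N\<in>nodes T. \<theta> N F M))"
  have thz: "\<theta> N F M = 0" if N: "N \<in> nodes T" and FM: "F \<notin> interior_edges T \<or> M \<notin> F" for N F M
  proof (cases "{F \<in> interior_edges T. N \<in> F} \<noteq> {}")
    case True
    then have "\<theta> N \<in> Mh T Kp" using thetaN N by auto
    then show ?thesis using FM unfolding Mh_def by blast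
  next
    case False
    then have "\<theta> N = (\<lambda>_ _. 0)" using thetaN N by auto
    then show ?thesis by simp
  qed
  have thz2: "\<theta> N F M = 0" if N: "N \<in> nodes T" and F: "F \<in> interior_edges T" "N \<notin> F" for N F M
  proof (cases "{F \<in> interior_edges T. N \<in> F} \<noteq> {}")
    case True
    then show ?thesis using thetaN N F by auto
  next
    case False
    then have "\<theta> N = (\<lambda>_ _. 0)" using thetaN N by auto
    then show ?thesis by simp
  qed
  have thc: "(\<Sum>G\<in>{G \<in> interior_edges T. N' \<in> G}. sgn_ccw Kp N' G * diameter G * \<theta> N G N') = 0"
    if N: "N \<in> nodes T" and N': "N' \<in> interior_nodes T" for N N'
  proof (cases "{F \<in> interior_edges T. N \<in> F} \<noteq> {}")
    case True
    then have "\<theta> N \<in> Mh T Kp" using thetaN N by auto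
    then show ?thesis using N' unfolding Mh_def by blast
  next
    case False
    then have "\<theta> N = (\<lambda>_ _. 0)" using thetaN N by auto
    then show ?thesis by simp
  qed
  have DMh: "D \<in> Mh T Kp"
    unfolding Mh_def
  proof (intro CollectI conjI allI impI ballI)
    fix F M assume FM: "F \<notin> interior_edges T \<or> M \<notin> F"
    have "\<theta>h F M = 0" using mixed1(2) FM unfolding Mh_def by blast
    moreover have "(\<Sum>N\<in>nodes T. \<theta> N F M) = 0" using thz FM by (intro sum.neutral) blast
    ultimately show "D F M = 0" by (simp add: D_def)
  next
    fix N' assume N': "N' \<in> interior_nodes T"
    let ?G = "{G \<in> interior_edges T. N' \<in> G}"
    have "(\<Sum>G\<in>?G. sgn_ccw Kp N' G * diameter G * D G N') =
       (\<Sum>G\<in>?G. sgn_ccw Kp N' G * diameter G * \<theta>h G N' - (\<Sum>N\<in>nodes T. sgn_ccw Kp N' G * diameter G * \<theta> N G N'))"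
      unfolding D_def by (rule sum.cong[OF refl]) (simp add: right_diff_distrib sum_distrib_left)
    also have "\<dots> = (\<Sum>G\<in>?G. sgn_ccw Kp N' G * diameter G * \<theta>h G N') -
        (\<Sum>G\<in>?G. \<Sum>N\<in>nodes T. sgn_ccw Kp N' G * diameter G * \<theta> N G N')"
      by (rule sum_subtractf)
    also have "(\<Sum>G\<in>?G. \<Sum>N\<in>nodes T. sgn_ccw Kp N' G * diameter G * \<theta> N G N') =
        (\<Sum>N\<in>nodes T. \<Sum>G\<in>?G. sgn_ccw Kp N' G * diameter G * \<theta> N G N')"
      by (rule sum.swap)
    also have "\<dots> = 0" using thc N' by (intro sum.neutral) blast
    also have "(\<Sum>G\<in>?G. sgn_ccw Kp N' G * diameter G * \<theta>h G N') = 0"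
      using mixed1(2) N' unfolding Mh_def by blast
    finally show "(\<Sum>G\<in>?G. sgn_ccw Kp N' G * diameter G * D G N') = 0" by simp
  qed
  have eqs: "\<forall>K\<in>T. \<forall>M\<in>K. bfs T Kp D K M = 0"
  proof (intro ballI)
    fix K M assume K: "K \<in> T" and M: "M \<in> K"
    have MN: "M \<in> nodes T" using K M unfolding nodes_def by blast
    have hDG: "hatchi K M \<in> DG T" by (rule hatchi_DG[OF conf K M])
    have bfsb: "bform T Kp \<mu> (hatchi K M) = bfs T Kp \<mu> K M" for \<mu>
      unfolding bfs_def by (rule BF[OF conf Kp K M])
    define r where "r = l_h T \<Omega>h \<Gamma> nh \<beta> f gh (hatchi K M) - at_h T Kp \<Omega>h \<Gamma> nh \<beta> \<gamma> uh (hatchi K M)"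
    have rh: "bfs T Kp \<theta>h K M = r" using mixed2 hDG bfsb[of \<theta>h] unfolding r_def by force
    have other: "bfs T Kp (\<theta> N) K M = 0" if N: "N \<in> nodes T - {M}" for N
    proof (cases "{F \<in> interior_edges T. N \<in> F} \<noteq> {}")
      case True
      show ?thesis
      proof (cases "N \<in> K")
        case True
        have Nn: "N \<in> nodes T" "M \<noteq> N" using N by auto
        have tN: "if {F \<in> interior_edges T. N \<in> F} \<noteq> {} then
           \<theta> N \<in> Mh T Kp
           \<and> (\<forall>F \<in> interior_edges T. N \<notin> F \<longrightarrow> (\<forall>M. \<theta> N F M = 0))
           \<and> (\<forall>K \<in> T. N \<in> K \<longrightarrow>
                 bform T Kp (\<theta> N) (hatchi K N)
                   = l_h T \<Omega>h \<Gamma> nh \<beta> f gh (hatchi K N) - at_h T Kp \<Omega>h \<Gamma> nh \<beta> \<gamma> uh (hatchi K N)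
               \<and> (\<forall>M \<in> K. M \<noteq> N \<longrightarrow> bform T Kp (\<theta> N) (hatchi K M) = 0))
         else \<theta> N = (\<lambda>_ _. 0)" using thetaN Nn(1) by blast
        then have "\<forall>K \<in> T. N \<in> K \<longrightarrow> (\<forall>M \<in> K. M \<noteq> N \<longrightarrow> bform T Kp (\<theta> N) (hatchi K M) = 0)"
          using tN[unfolded if_P[OF \<open>{F \<in> interior_edges T. N \<in> F} \<noteq> {}\<close>]] by blast
        then have "bform T Kp (\<theta> N) (hatchi K M) = 0" using K M True Nn(2) by blast
        then show ?thesis using bfsb by simp
      next
        case False
        show ?thesis unfolding bfs_def
          using thz2 N False by (intro sum.neutral) auto
      qed
    next
      case False
      then have "\<theta> N = (\<lambda>_ _. 0)" using thetaN N by auto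
      then show ?thesis by (simp add: bfs_def)
    qed
    have sumN: "(\<Sum>N\<in>nodes T. bfs T Kp (\<theta> N) K M) = bfs T Kp (\<theta> M) K M"
    proof -
      have "(\<Sum>N\<in>nodes T. bfs T Kp (\<theta> N) K M) = bfs T Kp (\<theta> M) K M + (\<Sum>N\<in>nodes T - {M}. bfs T Kp (\<theta> N) K M)"
        by (rule sum.remove[OF fN MN])
      also have "(\<Sum>N\<in>nodes T - {M}. bfs T Kp (\<theta> N) K M) = 0" using other by (intro sum.neutral) blast
      finally show ?thesis by simp
    qed
    have selfM: "bfs T Kp (\<theta> M) K M = r"
    proof (cases "{F \<in> interior_edges T. M \<in> F} \<noteq> {}")
      case True
      then have "bform T Kp (\<theta> M) (hatchi K M) = r" using thetaN MN K M unfolding r_def by auto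
      then show ?thesis using bfsb by simp
    next
      case False
      then have "\<theta> M = (\<lambda>_ _. 0)" using thetaN MN by auto
      then have "bfs T Kp (\<theta> M) K M = 0" by (simp add: bfs_def)
      moreover have "{F \<in> interior_edges T. F \<subseteq> K \<and> M \<in> F} = {}" using False by blast
      then have "bfs T Kp \<theta>h K M = 0" unfolding bfs_def by (simp only: sum.empty)
      ultimately show ?thesis using rh by simp
    qed
    show "bfs T Kp D K M = 0" unfolding D_def
      using bfs_lin[OF fN, of T Kp \<theta>h \<theta> K M] rh sumN selfM by simp
  qed
  have "D F M = 0" for F M by (rule uniq[OF conf Kp DMh eqs])
  then show ?thesis unfolding D_def by simp
qed


end
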